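(* Let $\mathcal G=(V_{\mathrm{Max}},V_{\mathrm{Min}},T,E,w)$ be any shortest-path game. Then for every vertex $v\in V$, the deterministic value equals the memoryless upper value: $\mathrm{Val}^{\mathrm{d}}(v)=\overline{\mathrm{Val}}^{\mathrm{m}}(v)$ (as elements of $\mathbb Z\cup\{-\infty,+\infty\}$).
   Context: A shortest-path game (SPG) is a tuple $\mathcal G=(V_{\mathrm{Max}},V_{\mathrm{Min}},T,E,w)$ where $V=V_{\mathrm{Max}}\uplus V_{\mathrm{Min}}\uplus T$ is a finite set of vertices (owned by player Max, player Min, and target vertices respectively), $E\subseteq (V\setminus T)\times V$ is a set of directed edges such that every $v\in V\setminus T$ has at least one successor, and $w\colon E\to\mathbb Z$ is a weight function. A play from $v_0$ is either a finite path $v_0v_1\cdots v_k$ with $v_k\in T$ and $v_i\notin T$ for $i<k$, or an infinite path never visiting $T$. Its total payoff is $\mathrm{TP}(\pi)=\sum_{i=0}^{k-1}w(v_i,v_{i+1})$ in the first case and $+\infty$ in the second. A strategy of Min maps every finite path ending in a vertex $v\in V_{\mathrm{Min}}$ to a probability distribution on $V$ supported in the successors of $v$; strategies of Max are defined symmetrically for $V_{\mathrm{Max}}$. A strategy is deterministic if it always returns a Dirac distribution, and memoryless if its output depends only on the last vertex. For deterministic strategies $\sigma$ of Min and $\tau$ of Max there is a unique play $\mathrm{out}(v,\sigma,\tau)$ from $v$ conforming to both; define $\mathrm{Val}^{\sigma}(v)=\sup_{\tau}\mathrm{TP}(\mathrm{out}(v,\sigma,\tau))$ and $\mathrm{Val}^{\mathrm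 d}(v)=\inf_{\sigma}\mathrm{Val}^{\sigma}(v)$ (sup/inf over deterministic strategies; this equals $\sup_\tau\inf_\sigma$). For a memoryless strategy $\rho$ of Min and a memoryless strategy $\tau$ of Max one obtains a Markov chain on $V$ (from $v\in V_{\mathrm{Min}}$ move according to $\rho(v)$, from $v\in V_{\mathrm{Max}}$ according to $\tau(v)$, targets absorbing); write $\mathbb P^{\rho,\tau}_v$ for the induced probability measure on plays from $v$ and $\mathbb E^{\rho,\tau}_v(\mathrm{TP})$ for the expected total payoff (which is $+\infty$ if the target is missed with positive probability). Define $\mathrm{Val}^{\mathrm m,\rho}(v)=\sup_{\tau}\mathbb E^{\rho,\tau}_v(\mathrm{TP})$ over memoryless strategies $\tau$ of Max, and the memoryless upper value $\overline{\mathrm{Val}}^{\mathrm m}(v)=\inf_{\rho}\mathrm{Val}^{\mathrm m,\rho}(v)$ over memoryless strategies $\rho$ of Min. *)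

theory Defs
  imports "HOL-Probability.Probability"
begin

text \<open>Vertices form a finite type 'v; the vertex set V is UNIV, partitioned into
  VMax, VMin and the target set T.  Edges E, integer weights w (only relevant on E).\<close>

definition spg :: "'v::finite set \<Rightarrow> 'v set \<Rightarrow> 'v set \<Rightarrow> ('v \<times> 'v) set \<Rightarrow> bool" where
  "spg VMax VMin T E \<longleftrightarrow>
     VMax \<inter> VMin = {} \<and> VMax \<inter> T = {} \<and> VMin \<inter> T = {} \<and>
     VMax \<union> VMin \<union> T = UNIV \<and>
     E \<subseteq> (- T) \<times> UNIV \<and>
     (\<forall>v. v \<notin> T \<longrightarrow> (\<exists>u. (v, u) \<in> E))"

text \<open>Plays are encoded as infinite sequences in which a target vertex, once reached,
  is repeated forever (targets are absorbing). The finite play is the prefix up to and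
  including the first target visit.\<close>

definition TP :: "'v set \<Rightarrow> ('v \<times> 'v \<Rightarrow> int) \<Rightarrow> (nat \<Rightarrow> 'v) \<Rightarrow> ereal" where
  "TP T w x =
     (if \<exists>n. x n \<in> T
      then ereal (real_of_int (\<Sum>i < (LEAST n. x n \<in> T). w (x i, x (Suc i))))
      else \<infinity>)"

text \<open>A deterministic strategy maps a finite path (nonempty list, last element = current
  vertex) to a successor of the current vertex whenever the current vertex is owned
  by the player.\<close>

definition det_strategy :: "'v set \<Rightarrow> ('v \<times> 'v) set \<Rightarrow> ('v list \<Rightarrow> 'v) \<Rightarrow> bool" where
  "det_strategy VP E \<sigma> \<longleftrightarrow> (\<forall>h. h \<noteq> [] \<and> last h \<in> VP \<longrightarrow> (last h, \<sigma> h) \<in> E)"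

definition det_step :: "'v set \<Rightarrow> 'v set \<Rightarrow> ('v list \<Rightarrow> 'v) \<Rightarrow> ('v list \<Rightarrow> 'v) \<Rightarrow> 'v list \<Rightarrow> 'v" where
  "det_step VMin T \<sigma> \<tau> h =
     (if last h \<in> T then last h else if last h \<in> VMin then \<sigma> h else \<tau> h)"

primrec det_hist :: "'v set \<Rightarrow> 'v set \<Rightarrow> ('v list \<Rightarrow> 'v) \<Rightarrow> ('v list \<Rightarrow> 'v) \<Rightarrow> 'v \<Rightarrow> nat \<Rightarrow> 'v list" where
  "det_hist VMin T \<sigma> \<tau> v 0 = [v]"
| "det_hist VMin T \<sigma> \<tau> v (Suc n) =
     det_hist VMin T \<sigma> \<tau> v n @ [det_step VMin T \<sigma> \<tau> (det_hist VMin T \<sigma> \<tau> v n)]"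

text \<open>The unique play out(v, sigma, tau) (sigma: Min, tau: Max).\<close>
definition out :: "'v set \<Rightarrow> 'v set \<Rightarrow> 'v \<Rightarrow> ('v list \<Rightarrow> 'v) \<Rightarrow> ('v list \<Rightarrow> 'v) \<Rightarrow> nat \<Rightarrow> 'v" where
  "out VMin T v \<sigma> \<tau> n = last (det_hist VMin T \<sigma> \<tau> v n)"

definition Val_sigma ::
  "'v set \<Rightarrow> 'v set \<Rightarrow> 'v set \<Rightarrow> ('v \<times> 'v) set \<Rightarrow> ('v \<times> 'v \<Rightarrow> int) \<Rightarrow> ('v list \<Rightarrow> 'v) \<Rightarrow> 'v \<Rightarrow> ereal" where
  "Val_sigma VMax VMin T E w \<sigma> v =
     (SUP \<tau> \<in> {\<tau>. det_strategy VMax E \<tau>}. TP T w (out VMin T v \<sigma> \<tau>))"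

definition Val_d ::
  "'v set \<Rightarrow> 'v set \<Rightarrow> 'v set \<Rightarrow> ('v \<times> 'v) set \<Rightarrow> ('v \<times> 'v \<Rightarrow> int) \<Rightarrow> 'v \<Rightarrow> ereal" where
  "Val_d VMax VMin T E w v =
     (INF \<sigma> \<in> {\<sigma>. det_strategy VMin E \<sigma>}. Val_sigma VMax VMin T E w \<sigma> v)"

definition mless_strategy :: "'v set \<Rightarrow> ('v \<times> 'v) set \<Rightarrow> ('v \<Rightarrow> 'v pmf) \<Rightarrow> bool" where
  "mless_strategy VP E \<rho> \<longleftrightarrow> (\<forall>v \<in> VP. set_pmf (\<rho> v) \<subseteq> {u. (v, u) \<in> E})"

definition mc_kernel :: "'v set \<Rightarrow> 'v set \<Rightarrow> ('v \<Rightarrow> 'v pmf) \<Rightarrow> ('v \<Rightarrow> 'v pmf) \<Rightarrow> 'v \<Rightarrow> 'v pmf" where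
  "mc_kernel VMin T \<rho> \<tau> u =
     (if u \<in> T then return_pmf u else if u \<in> VMin then \<rho> u else \<tau> u)"

text \<open>Construction of the path measure of a finite Markov chain with kernel K
  (random mapping representation): draw i.i.d. random maps f_0, f_1, ... where
  f_n(u) ~ K(u) independently over u, and set X_0 = v, X_(n+1) = f_n(X_n).
  The law of (X_n)_n on the stream space is the Markov chain measure P_v.\<close>

primrec mc_traj :: "'v \<Rightarrow> ('v \<Rightarrow> 'v) stream \<Rightarrow> nat \<Rightarrow> 'v" where
  "mc_traj v \<omega> 0 = v"
| "mc_traj v \<omega> (Suc n) = (\<omega> !! n) (mc_traj v \<omega> n)"

definition mc_paths :: "('v::finite \<Rightarrow> 'v pmf) \<Rightarrow> 'v \<Rightarrow> 'v stream measure" where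
  "mc_paths K v =
     distr (stream_space (measure_pmf (Pi_pmf UNIV undefined K)))
           (stream_space (count_space UNIV))
           (\<lambda>\<omega>. to_stream (mc_traj v \<omega>))"

definition exp_TP :: "'v set \<Rightarrow> ('v \<times> 'v \<Rightarrow> int) \<Rightarrow> 'v stream measure \<Rightarrow> ereal" where
  "exp_TP T w M =
     (if emeasure M {s \<in> space M. \<forall>n. s !! n \<notin> T} \<noteq> 0 then \<infinity>
      else enn2ereal (\<integral>\<^sup>+ s. ennreal (max 0 (real_of_ereal (TP T w (snth s)))) \<partial>M)
         - enn2ereal (\<integral>\<^sup>+ s. ennreal (max 0 (- real_of_ereal (TP T w (snth s)))) \<partial>M))"

definition Val_m_rho ::
  "'v::finite set \<Rightarrow> 'v set \<Rightarrow> 'v set \<Rightarrow> ('v \<times> 'v) set \<Rightarrow> ('v \<times> 'v \<Rightarrow> int) \<Rightarrow> ('v \<Rightarrow> 'v pmf) \<Rightarrow> 'v \<Rightarrow> ereal" where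
  "Val_m_rho VMax VMin T E w \<rho> v =
     (SUP \<tau> \<in> {\<tau>. mless_strategy VMax E \<tau>}. exp_TP T w (mc_paths (mc_kernel VMin T \<rho> \<tau>) v))"

definition Val_m_upper ::
  "'v::finite set \<Rightarrow> 'v set \<Rightarrow> 'v set \<Rightarrow> ('v \<times> 'v) set \<Rightarrow> ('v \<times> 'v \<Rightarrow> int) \<Rightarrow> 'v \<Rightarrow> ereal" where
  "Val_m_upper VMax VMin T E w v =
     (INF \<rho> \<in> {\<rho>. mless_strategy VMin E \<rho>}. Val_m_rho VMax VMin T E w \<rho> v)"

end

theory Submission
  imports Defs
begin


abbreviation SS :: "'v stream measure" where "SS \<equiv> stream_space (count_space UNIV)"

definition Om :: "('v::finite \<Rightarrow> 'v pmf) \<Rightarrow> ('v \<Rightarrow> 'v) stream measure" where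
  "Om K = stream_space (measure_pmf (Pi_pmf UNIV undefined K))"

lemma mc_traj_meas:
  "(\<lambda>\<omega>. mc_traj v \<omega> n) \<in> measurable (Om K) (count_space UNIV)"
proof (induction n)
  case 0 then show ?case by simp
next
  case (Suc n)
  have "(\<lambda>\<omega>. (\<lambda>i. (\<omega> !! n) i) (mc_traj v \<omega> n)) \<in> measurable (Om K) (count_space UNIV)"
  proof (rule measurable_compose_countable'[OF _ Suc])
    fix i :: 'a
    have "(\<lambda>\<omega>. \<omega> !! n) \<in> measurable (Om K) (measure_pmf (Pi_pmf UNIV undefined K))"
      unfolding Om_def by (rule measurable_snth)
    then have "(\<lambda>\<omega>. \<omega> !! n) \<in> measurable (Om K) (count_space UNIV)"
      by simp
    then show "(\<lambda>\<omega>. (\<omega> !! n) i) \<in> measurable (Om K) (count_space UNIV)"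
      by (rule measurable_compose) simp
  qed simp
  then show ?case by simp
qed

lemma traj_meas:
  "(\<lambda>\<omega>. to_stream (mc_traj v \<omega>)) \<in> measurable (Om K) SS"
  by (rule measurable_stream_space2) (simp add: to_stream_def mc_traj_meas)

lemma prob_Om: "prob_space (Om K)"
  unfolding Om_def by (rule prob_space.prob_space_stream_space) (rule prob_space_measure_pmf)

lemma prob_mc: "prob_space (mc_paths K v)"
  unfolding mc_paths_def Om_def[symmetric]
  by (rule prob_space.prob_space_distr[OF prob_Om traj_meas])

lemma sets_mc[simp, measurable_cong]: "sets (mc_paths K v) = sets SS"
  unfolding mc_paths_def by simp

lemma space_mc[simp]: "space (mc_paths K v) = space SS"
  unfolding mc_paths_def by simp

lemma mc_traj_Cons: "mc_traj u (x ## \<omega>) (Suc n) = mc_traj (x u) \<omega> n"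
  by (induction n) auto

lemma to_stream_traj_Cons: "to_stream (mc_traj u (x ## \<omega>)) = u ## to_stream (mc_traj (x u) \<omega>)"
proof -
  have "mc_traj u (x ## \<omega>) = case_nat u (mc_traj (x u) \<omega>)"
    by (rule ext, case_tac xa) (simp_all only: mc_traj_Cons nat.case mc_traj.simps(1))
  then show ?thesis by (simp add: to_stream_nat_case)
qed

lemma nn_first_step:
  assumes f[measurable]: "f \<in> borel_measurable SS"
  shows "(\<integral>\<^sup>+s. f s \<partial>mc_paths K u) =
     (\<integral>\<^sup>+u'. (\<integral>\<^sup>+s. f (u ## s) \<partial>mc_paths K u') \<partial>measure_pmf (K u))"
proof -
  let ?P = "Pi_pmf UNIV undefined K"
  have tm: "(\<lambda>\<omega>. to_stream (mc_traj v \<omega>)) \<in> measurable (stream_space (measure_pmf ?P)) SS" for v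
    using traj_meas[of v K] unfolding Om_def .
  have "(\<integral>\<^sup>+s. f s \<partial>mc_paths K u) = (\<integral>\<^sup>+\<omega>. f (to_stream (mc_traj u \<omega>)) \<partial>stream_space (measure_pmf ?P))"
    unfolding mc_paths_def by (rule nn_integral_distr[OF tm]) simp
  also have "\<dots> = (\<integral>\<^sup>+x. (\<integral>\<^sup>+\<omega>. f (to_stream (mc_traj u (x ## \<omega>))) \<partial>stream_space (measure_pmf ?P)) \<partial>measure_pmf ?P)"
    by (rule prob_space.nn_integral_stream_space[OF prob_space_measure_pmf]) (rule measurable_compose[OF tm f])
  also have "\<dots> = (\<integral>\<^sup>+x. (\<lambda>u'. \<integral>\<^sup>+s. f (u ## s) \<partial>mc_paths K u') (x u) \<partial>measure_pmf ?P)"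
  proof (rule nn_integral_cong)
    fix x
    have "(\<integral>\<^sup>+\<omega>. f (to_stream (mc_traj u (x ## \<omega>))) \<partial>stream_space (measure_pmf ?P))
       = (\<integral>\<^sup>+\<omega>. f (u ## to_stream (mc_traj (x u) \<omega>)) \<partial>stream_space (measure_pmf ?P))"
      by (simp add: to_stream_traj_Cons)
    also have "\<dots> = (\<integral>\<^sup>+s. f (u ## s) \<partial>mc_paths K (x u))"
      unfolding mc_paths_def by (rule nn_integral_distr[OF tm, symmetric]) simp
    finally show "(\<integral>\<^sup>+\<omega>. f (to_stream (mc_traj u (x ## \<omega>))) \<partial>stream_space (measure_pmf ?P)) =
        (\<lambda>u'. \<integral>\<^sup>+s. f (u ## s) \<partial>mc_paths K u') (x u)" by simp
  qed
  also have "\<dots> = (\<integral>\<^sup>+u'. (\<integral>\<^sup>+s. f (u ## s) \<partial>mc_paths K u') \<partial>measure_pmf (map_pmf (\<lambda>x. x u) ?P))"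
    by (simp add: map_pmf_rep_eq nn_integral_distr)
  also have "map_pmf (\<lambda>x. x u) ?P = K u"
    by (simp add: Pi_pmf_component)
  finally show ?thesis .
qed

lemma subprob_mc: "mc_paths K u \<in> space (subprob_algebra SS)"
  using prob_mc[of K u] by (auto simp: space_subprob_algebra prob_space_imp_subprob_space)

lemma kern_meas:
  "(\<lambda>u'. distr (mc_paths K u') SS ((##) u)) \<in> measurable (measure_pmf p) (subprob_algebra SS)"
proof -
  have "distr (mc_paths K u') SS ((##) u) \<in> space (subprob_algebra SS)" for u'
  proof -
    have m: "((##) u) \<in> measurable (mc_paths K u') SS"
      by (simp add: measurable_cong_sets[OF sets_mc refl])
    interpret prob_space "mc_paths K u'" by (rule prob_mc)
    show ?thesis using prob_space_distr[OF m]
      by (auto simp: space_subprob_algebra prob_space_imp_subprob_space)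
  qed
  then show ?thesis by (simp add: measurable_pmf_measure1)
qed

lemma mc_bind:
  "mc_paths K u = measure_pmf (K u) \<bind> (\<lambda>u'. distr (mc_paths K u') SS ((##) u))"
proof (rule measure_eqI)
  show "sets (mc_paths K u) = sets (measure_pmf (K u) \<bind> (\<lambda>u'. distr (mc_paths K u') SS ((##) u)))"
    by (subst sets_bind[where N=SS]) auto
next
  fix X assume X: "X \<in> sets (mc_paths K u)"
  then have X': "X \<in> sets SS" by simp
  have "emeasure (mc_paths K u) X = (\<integral>\<^sup>+s. indicator X s \<partial>mc_paths K u)"
    using X by simp
  also have "\<dots> = (\<integral>\<^sup>+u'. (\<integral>\<^sup>+s. indicator X (u ## s) \<partial>mc_paths K u') \<partial>measure_pmf (K u))"
    by (rule nn_first_step) (simp add: X' borel_measurable_indicator)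
  also have "\<dots> = (\<integral>\<^sup>+u'. emeasure (distr (mc_paths K u') SS ((##) u)) X \<partial>measure_pmf (K u))"
  proof (rule nn_integral_cong)
    fix u'
    have m: "((##) u) \<in> measurable (mc_paths K u') SS"
      by (simp add: measurable_cong_sets[OF sets_mc refl])
    show "(\<integral>\<^sup>+s. indicator X (u ## s) \<partial>mc_paths K u') = emeasure (distr (mc_paths K u') SS ((##) u)) X"
      using X' m by (simp add: nn_integral_distr[OF m] borel_measurable_indicator
         nn_integral_indicator[symmetric] del: nn_integral_indicator)
  qed
  also have "\<dots> = emeasure (measure_pmf (K u) \<bind> (\<lambda>u'. distr (mc_paths K u') SS ((##) u))) X"
    by (rule emeasure_bind[symmetric, OF _ kern_meas X']) simp
  finally show "emeasure (mc_paths K u) X = emeasure (measure_pmf (K u) \<bind> (\<lambda>u'. distr (mc_paths K u') SS ((##) u))) X" .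
qed

lemma int_first_step:
  fixes f :: "'v::finite stream \<Rightarrow> real"
  assumes f[measurable]: "f \<in> borel_measurable SS" and bnd: "\<And>s. \<bar>f s\<bar> \<le> B"
  shows "(\<integral>s. f s \<partial>mc_paths K u) = (\<integral>u'. (\<integral>s. f (u ## s) \<partial>mc_paths K u') \<partial>measure_pmf (K u))"
proof -
  have "(\<integral>s. f s \<partial>mc_paths K u) = (\<integral>u'. (\<integral>s. f s \<partial>distr (mc_paths K u') SS ((##) u)) \<partial>measure_pmf (K u))"
    apply (subst mc_bind)
    apply (rule integral_bind[OF f _ kern_meas, where B=B and B'=1])
    subgoal using bnd by simp
    subgoal by (rule measure_pmf.finite_measure_axioms)
    subgoal proof (rule AE_I2)
      fix u'
      have m: "((##) u) \<in> measurable (mc_paths K u') SS"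
        by (simp add: measurable_cong_sets[OF sets_mc refl])
      interpret prob_space "distr (mc_paths K u') SS ((##) u)"
        by (rule prob_space.prob_space_distr[OF prob_mc m])
      show "emeasure (distr (mc_paths K u') SS ((##) u)) (space (distr (mc_paths K u') SS ((##) u))) \<le> ennreal 1"
        using emeasure_space_1 by simp
    qed
    done
  also have "\<dots> = (\<integral>u'. (\<integral>s. f (u ## s) \<partial>mc_paths K u') \<partial>measure_pmf (K u))"
    by (rule Bochner_Integration.integral_cong[OF refl], rule integral_distr)
       (simp_all add: measurable_cong_sets[OF sets_mc refl])
  finally show ?thesis .
qed

definition good :: "('v \<Rightarrow> 'v pmf) \<Rightarrow> 'v \<Rightarrow> 'v stream \<Rightarrow> bool" where
  "good K u s \<longleftrightarrow> shd s = u \<and> (\<forall>i. s !! (Suc i) \<in> set_pmf (K (s !! i)))"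

lemma good_meas[measurable]: "Measurable.pred (SS::'v::finite stream measure) (good K u)"
  unfolding good_def by measurable

lemma AE_good: "AE s in mc_paths K u. good K u s"
proof -
  let ?P = "Pi_pmf UNIV undefined K"
  have tm: "(\<lambda>\<omega>. to_stream (mc_traj u \<omega>)) \<in> measurable (stream_space (measure_pmf ?P)) SS"
    using traj_meas[of u K] unfolding Om_def .
  have "AE \<omega> in stream_space (measure_pmf ?P). stream_all (\<lambda>x. x \<in> set_pmf ?P) \<omega>"
    by (rule prob_space.AE_stream_all[OF prob_space_measure_pmf]) (auto simp: AE_measure_pmf)
  then have "AE \<omega> in stream_space (measure_pmf ?P). good K u (to_stream (mc_traj u \<omega>))"
  proof (rule AE_mp, intro AE_I2 impI)
    fix \<omega> assume a: "stream_all (\<lambda>x. x \<in> set_pmf ?P) \<omega>"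
    have "(\<omega> !! i) x \<in> set_pmf (K x)" for i x
      using a by (auto simp: stream_all_def set_Pi_pmf PiE_dflt_def)
    then show "good K u (to_stream (mc_traj u \<omega>))"
      by (simp add: good_def to_stream_def)
  qed
  then show ?thesis
    unfolding mc_paths_def by (subst AE_distr_iff[OF tm]) auto
qed

lemma AE_closed:
  assumes "u \<in> A" "\<And>x. x \<in> A \<Longrightarrow> set_pmf (K x) \<subseteq> A"
  shows "AE s in mc_paths K u. \<forall>i. s !! i \<in> A"
  using AE_good[of K u]
proof (rule AE_mp, intro AE_I2 impI allI)
  fix s i assume g: "good K u s"
  show "s !! i \<in> A"
    by (induction i) (use g assms in \<open>auto simp: good_def\<close>)
qed


lemma pred_snth_in[measurable]: "Measurable.pred (SS::'v::countable stream measure) (\<lambda>s. s !! n \<in> A)"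
  by (rule measurable_compose[OF measurable_snth]) simp

lemma snth_pair_meas:
  "(\<lambda>s. f (s !! i, s !! Suc i) :: real) \<in> borel_measurable (SS::'v::countable stream measure)"
proof -
  have "(\<lambda>s. (s !! i, s !! Suc i)) \<in> measurable SS (count_space UNIV \<Otimes>\<^sub>M count_space UNIV)"
    by measurable
  then have "(\<lambda>s. (s !! i, s !! Suc i)) \<in> measurable SS (count_space (UNIV::('v\<times>'v) set))"
    by (simp add: pair_measure_countable)
  then show ?thesis by (rule measurable_compose) simp
qed

lemma TP_meas[measurable]: "(\<lambda>s. TP T w (snth s)) \<in> borel_measurable (SS::'v::countable stream measure)"
proof -
  have [measurable]: "(\<lambda>s. ereal (real_of_int (\<Sum>i<k. w (s !! i, s !! Suc i)))) \<in> borel_measurable (SS::'v stream measure)" for k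
  proof -
    have "(\<lambda>s. \<Sum>i<k. real_of_int (w (s !! i, s !! Suc i))) \<in> borel_measurable (SS::'v stream measure)"
      by (rule borel_measurable_sum) (rule snth_pair_meas)
    then show ?thesis unfolding of_int_sum by (rule borel_measurable_ereal)
  qed
  have "(\<lambda>s. (\<lambda>k. ereal (real_of_int (\<Sum>i<k. w (s !! i, s !! Suc i)))) (LEAST n. s !! n \<in> T)) \<in> borel_measurable (SS::'v stream measure)"
    by (rule measurable_compose_countable'[where I=UNIV]) auto
  then show ?thesis
    unfolding TP_def by measurable
qed

lemma TPr_meas[measurable]: "(\<lambda>s. real_of_ereal (TP T w (snth s))) \<in> borel_measurable (SS::'v::countable stream measure)"
  by measurable

definition NT :: "'v set \<Rightarrow> nat \<Rightarrow> 'v stream set" where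
  "NT T N = {s. \<forall>i<N. s !! i \<notin> T}"

lemma NT_sets[measurable]: "NT T N \<in> sets (SS::'v::countable stream measure)"
proof -
  have "NT T N = {s \<in> space SS. \<forall>i<N. s !! i \<notin> T}"
    by (auto simp: NT_def space_stream_space)
  also have "\<dots> \<in> sets (SS::'v::countable stream measure)" by measurable
  finally show ?thesis .
qed

lemma indicator_NT_Cons:
  "indicator (NT T (Suc N)) (u ## s) = (if u \<in> T then 0 else (indicator (NT T N) s :: real))"
proof -
  have "(u ## s) \<in> NT T (Suc N) \<longleftrightarrow> u \<notin> T \<and> s \<in> NT T N"
    by (auto simp: NT_def less_Suc_eq_0_disj)
  then show ?thesis by (auto split: split_indicator)
qed

abbreviation pN :: "('v::finite \<Rightarrow> 'v pmf) \<Rightarrow> 'v set \<Rightarrow> nat \<Rightarrow> 'v \<Rightarrow> real" where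
  "pN K T N u \<equiv> measure (mc_paths K u) (NT T N)"

lemma pN_0: "pN K T 0 u = 1"
proof -
  have "NT T 0 = space (mc_paths K u)" by (auto simp: NT_def space_stream_space)
  then show ?thesis using prob_space.prob_space[OF prob_mc] by simp
qed

lemma int_ind_NT: "(\<integral>s. indicator (NT T N) s \<partial>mc_paths K u) = pN K T N u"
proof -
  interpret prob_space "mc_paths K u" by (rule prob_mc)
  show ?thesis by (simp add: emeasure_eq_measure)
qed

lemma pN_Suc: "pN K T (Suc N) u = (if u \<in> T then 0 else \<integral>u'. pN K T N u' \<partial>measure_pmf (K u))"
proof -
  interpret prob_space "mc_paths K u" by (rule prob_mc)
  have "pN K T (Suc N) u = (\<integral>s. indicator (NT T (Suc N)) s \<partial>mc_paths K u)"
    by (simp add: emeasure_eq_measure)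
  also have "\<dots> = (\<integral>u'. (\<integral>s. indicator (NT T (Suc N)) (u ## s) \<partial>mc_paths K u') \<partial>measure_pmf (K u))"
    by (rule int_first_step[where B=1]) (auto simp: borel_measurable_indicator split: split_indicator)
  also have "\<dots> = (if u \<in> T then 0 else \<integral>u'. pN K T N u' \<partial>measure_pmf (K u))"
    unfolding indicator_NT_Cons
    by (auto intro!: Bochner_Integration.integral_cong simp: int_ind_NT)
  finally show ?thesis .
qed

lemma pN_nonneg: "0 \<le> pN K T N u" by simp

lemma pN_le1: "pN K T N u \<le> 1"
  using prob_space.prob_le_1[OF prob_mc] by blast

lemma pN_mono: "N \<le> N' \<Longrightarrow> pN K T N' u \<le> pN K T N u"
proof -
  interpret prob_space "mc_paths K u" by (rule prob_mc)
  assume "N \<le> N'"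
  then have "NT T N' \<subseteq> NT T N" by (auto simp: NT_def)
  then show ?thesis by (intro finite_measure_mono) auto
qed

lemma pN_geom:
  assumes closed: "\<And>u. u \<in> A \<Longrightarrow> set_pmf (K u) \<subseteq> A"
    and hq: "\<And>u. u \<in> A \<Longrightarrow> pN K T m u \<le> q"
  shows "u \<in> A \<Longrightarrow> pN K T (m + k) u \<le> pN K T k u * q"
proof (induction k arbitrary: u)
  case 0 then show ?case using hq by (simp add: pN_0)
next
  case (Suc k)
  show ?case
  proof (cases "u \<in> T")
    case True then show ?thesis by (simp add: pN_Suc)
  next
    case False
    have "pN K T (m + Suc k) u = (\<integral>u'. pN K T (m + k) u' \<partial>measure_pmf (K u))"
      using False by (simp add: pN_Suc)
    also have "\<dots> \<le> (\<integral>u'. pN K T k u' * q \<partial>measure_pmf (K u))"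
      using Suc.IH closed[OF Suc.prems]
      by (intro integral_mono_AE) (auto simp: AE_measure_pmf_iff integrable_measure_pmf_finite)
    also have "\<dots> = pN K T (Suc k) u * q"
      using False by (simp add: pN_Suc)
    finally show ?thesis .
  qed
qed

lemma pN_pow:
  assumes closed: "\<And>u. u \<in> A \<Longrightarrow> set_pmf (K u) \<subseteq> A"
    and hq: "\<And>u. u \<in> A \<Longrightarrow> pN K T m u \<le> q" and q0: "0 \<le> q"
  shows "u \<in> A \<Longrightarrow> pN K T (j * m) u \<le> q ^ j"
proof (induction j arbitrary: u)
  case 0 then show ?case by (simp add: pN_0)
next
  case (Suc j)
  have "pN K T (Suc j * m) u = pN K T (m + j * m) u" by (simp add: add.commute)
  also have "\<dots> \<le> pN K T (j * m) u * q" by (rule pN_geom[OF closed hq Suc.prems])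
  also have "\<dots> \<le> q ^ j * q" by (rule mult_right_mono[OF Suc.IH[OF Suc.prems] q0])
  finally show ?case by (simp add: mult.commute)
qed

fun Gf :: "'v set \<Rightarrow> ('v \<times> 'v \<Rightarrow> int) \<Rightarrow> ('v \<Rightarrow> real) \<Rightarrow> nat \<Rightarrow> 'v stream \<Rightarrow> real" where
  "Gf T w \<phi> 0 s = \<phi> (shd s)"
| "Gf T w \<phi> (Suc N) s = (if shd s \<in> T then \<phi> (shd s)
      else real_of_int (w (shd s, shd (stl s))) + Gf T w \<phi> N (stl s))"

lemma Gf_meas[measurable]: "Gf T w \<phi> N \<in> borel_measurable (SS::'v::countable stream measure)"
proof (induction N)
  case 0
  have "(\<lambda>s. \<phi> (shd s)) \<in> borel_measurable (SS::'v stream measure)"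
    by (rule measurable_compose[OF measurable_shd]) simp
  then show ?case by simp
next
  case (Suc N)
  have [measurable]: "Gf T w \<phi> N \<in> borel_measurable (SS::'v stream measure)" by (rule Suc)
  have [measurable]: "(\<lambda>s. \<phi> (shd s)) \<in> borel_measurable (SS::'v stream measure)"
    by (rule measurable_compose[OF measurable_shd]) simp
  have [measurable]: "(\<lambda>s. real_of_int (w (shd s, shd (stl s)))) \<in> borel_measurable (SS::'v stream measure)"
    using snth_pair_meas[of "\<lambda>x. real_of_int (w x)" 0] by simp
  have [measurable]: "Measurable.pred (SS::'v stream measure) (\<lambda>s. shd s \<in> T)"
    using pred_snth_in[of 0 T] by simp
  have "(\<lambda>s. Gf T w \<phi> N (stl s)) \<in> borel_measurable (SS::'v stream measure)"
    by (rule measurable_compose[OF measurable_stl]) simp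
  then show ?case by simp
qed

lemma Gf_eq:
  "k \<le> N \<Longrightarrow> (\<forall>i<k. s !! i \<notin> T) \<Longrightarrow> (k = N \<or> s !! k \<in> T) \<Longrightarrow>
   Gf T w \<phi> N s = (\<Sum>i<k. real_of_int (w (s !! i, s !! Suc i))) + \<phi> (s !! k)"
proof (induction N arbitrary: s k)
  case 0 then show ?case by simp
next
  case (Suc N)
  show ?case
  proof (cases "shd s \<in> T")
    case True
    then have "k = 0" using Suc.prems(2) by (cases k) auto
    then show ?thesis using True by simp
  next
    case False
    then have "k \<noteq> 0" using Suc.prems(3) by (cases k) auto
    then obtain k' where k: "k = Suc k'" by (cases k) auto
    have IH: "Gf T w \<phi> N (stl s) = (\<Sum>i<k'. real_of_int (w (stl s !! i, stl s !! Suc i))) + \<phi> (stl s !! k')"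
      using Suc.prems k by (intro Suc.IH) auto
    show ?thesis using False
      by (simp add: IH k sum.lessThan_Suc_shift del: sum.lessThan_Suc)
  qed
qed

lemma Gf_bound:
  fixes w :: "'v::finite \<times> 'v \<Rightarrow> int"
  shows "\<bar>Gf T w \<phi> N s\<bar> \<le> real N * (\<Sum>x\<in>UNIV. \<bar>real_of_int (w x)\<bar>) + (\<Sum>u\<in>UNIV. \<bar>\<phi> u\<bar>)"
proof (induction N arbitrary: s)
  case 0 then show ?case using member_le_sum[of "shd s" UNIV "\<lambda>u. \<bar>\<phi> u\<bar>"] by simp
next
  case (Suc N)
  have a: "\<bar>real_of_int (w x)\<bar> \<le> (\<Sum>x\<in>UNIV. \<bar>real_of_int (w x)\<bar>)" for x
    by (rule member_le_sum) auto
  have b: "\<bar>\<phi> x\<bar> \<le> (\<Sum>u\<in>UNIV. \<bar>\<phi> u\<bar>)" for x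
    by (rule member_le_sum) auto
  have c: "0 \<le> (\<Sum>x\<in>UNIV. \<bar>real_of_int (w x)\<bar>)" by (simp add: sum_nonneg)
  have d: "0 \<le> real N * (\<Sum>x\<in>UNIV. \<bar>real_of_int (w x)\<bar>)" using c by simp
  show ?case
  proof (cases "shd s \<in> T")
    case True
    then have "\<bar>Gf T w \<phi> (Suc N) s\<bar> = \<bar>\<phi> (shd s)\<bar>" by simp
    moreover have "real (Suc N) * (\<Sum>x\<in>UNIV. \<bar>real_of_int (w x)\<bar>) = (\<Sum>x\<in>UNIV. \<bar>real_of_int (w x)\<bar>) + real N * (\<Sum>x\<in>UNIV. \<bar>real_of_int (w x)\<bar>)"
      by (simp add: algebra_simps)
    ultimately show ?thesis using b[of "shd s"] c d by linarith
  next
    case False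
    have "\<bar>Gf T w \<phi> (Suc N) s\<bar> \<le> \<bar>real_of_int (w (shd s, shd (stl s)))\<bar> + \<bar>Gf T w \<phi> N (stl s)\<bar>"
      using False by (simp add: abs_triangle_ineq)
    then show ?thesis using Suc.IH[of "stl s"] a[of "(shd s, shd (stl s))"] by (simp add: algebra_simps)
  qed
qed

lemma measure_mc_space[simp]: "measure (mc_paths K u) (space SS) = 1"
proof -
  interpret prob_space "mc_paths K u" by (rule prob_mc)
  show ?thesis using prob_space by simp
qed

lemma emeasure_mc_space[simp]: "emeasure (mc_paths K u) (space SS) = 1"
proof -
  interpret prob_space "mc_paths K u" by (rule prob_mc)
  show ?thesis using emeasure_space_1 by simp
qed

lemma int_const_mc: "(\<integral>s. (c::real) \<partial>mc_paths K u) = c"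
proof -
  interpret prob_space "mc_paths K u" by (rule prob_mc)
  show ?thesis using prob_space by simp
qed

lemma Gf_exp:
  fixes K :: "'v::finite \<Rightarrow> 'v pmf" and \<phi> :: "'v \<Rightarrow> real"
  assumes closed: "\<And>u. u \<in> A \<Longrightarrow> set_pmf (K u) \<subseteq> A"
    and pot: "\<And>u. u \<in> A \<Longrightarrow> u \<notin> T \<Longrightarrow> (\<integral>u'. real_of_int (w (u,u')) + \<phi> u' \<partial>measure_pmf (K u)) \<le> \<phi> u"
  shows "u \<in> A \<Longrightarrow> (\<integral>s. Gf T w \<phi> N s \<partial>mc_paths K u) \<le> \<phi> u"
proof (induction N arbitrary: u)
  case 0
  interpret prob_space "mc_paths K u" by (rule prob_mc)
  have "(\<integral>s. Gf T w \<phi> 0 s \<partial>mc_paths K u) = (\<integral>s. \<phi> u \<partial>mc_paths K u)"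
    using AE_good[of K u] by (intro integral_cong_AE) (auto simp: good_def)
  then show ?case using prob_space by simp
next
  case (Suc N)
  let ?B = "real (Suc N) * (\<Sum>x\<in>UNIV. \<bar>real_of_int (w x)\<bar>) + (\<Sum>u\<in>UNIV. \<bar>\<phi> u\<bar>)"
  have "(\<integral>s. Gf T w \<phi> (Suc N) s \<partial>mc_paths K u) =
     (\<integral>u'. (\<integral>s. Gf T w \<phi> (Suc N) (u ## s) \<partial>mc_paths K u') \<partial>measure_pmf (K u))"
    by (rule int_first_step[where B="?B"]) (simp, rule Gf_bound)
  also have "\<dots> \<le> \<phi> u"
  proof (cases "u \<in> T")
    case True
    have "(\<integral>u'. (\<integral>s. Gf T w \<phi> (Suc N) (u ## s) \<partial>mc_paths K u') \<partial>measure_pmf (K u))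
       = (\<integral>u'. \<phi> u \<partial>measure_pmf (K u))"
      using True by (intro Bochner_Integration.integral_cong) (auto simp: int_const_mc)
    then show ?thesis by simp
  next
    case False
    have "(\<integral>u'. (\<integral>s. Gf T w \<phi> (Suc N) (u ## s) \<partial>mc_paths K u') \<partial>measure_pmf (K u))
       \<le> (\<integral>u'. real_of_int (w (u,u')) + \<phi> u' \<partial>measure_pmf (K u))"
    proof (intro integral_mono_AE)
      show "AE u' in measure_pmf (K u). (\<integral>s. Gf T w \<phi> (Suc N) (u ## s) \<partial>mc_paths K u') \<le> real_of_int (w (u,u')) + \<phi> u'"
        unfolding AE_measure_pmf_iff
      proof (intro ballI)
        fix u' assume u': "u' \<in> set_pmf (K u)"
        then have u'A: "u' \<in> A" using closed Suc.prems by auto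
        interpret prob_space "mc_paths K u'" by (rule prob_mc)
        have int: "integrable (mc_paths K u') (Gf T w \<phi> N)"
          by (rule integrable_const_bound[where B="real N * (\<Sum>x\<in>UNIV. \<bar>real_of_int (w x)\<bar>) + (\<Sum>u\<in>UNIV. \<bar>\<phi> u\<bar>)"])
             (auto intro: Gf_bound)
        have "(\<integral>s. Gf T w \<phi> (Suc N) (u ## s) \<partial>mc_paths K u') = (\<integral>s. real_of_int (w (u,u')) + Gf T w \<phi> N s \<partial>mc_paths K u')"
          using AE_good[of K u'] False by (intro integral_cong_AE) (auto simp: good_def)
        also have "\<dots> = real_of_int (w (u,u')) + (\<integral>s. Gf T w \<phi> N s \<partial>mc_paths K u')"
          using int by simp
        also have "\<dots> \<le> real_of_int (w (u,u')) + \<phi> u'"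
          using Suc.IH[OF u'A] by simp
        finally show "(\<integral>s. Gf T w \<phi> (Suc N) (u ## s) \<partial>mc_paths K u') \<le> real_of_int (w (u,u')) + \<phi> u'" .
      qed
    qed (auto simp: integrable_measure_pmf_finite)
    also have "\<dots> \<le> \<phi> u" using pot[OF Suc.prems False] .
    finally show ?thesis .
  qed
  finally show ?case .
qed

definition Hn :: "'v set \<Rightarrow> 'v stream \<Rightarrow> nat" where
  "Hn T s = (if \<exists>n. s !! n \<in> T then LEAST n. s !! n \<in> T else 0)"

lemma Hn_meas[measurable]: "Hn T \<in> measurable (SS::'v::countable stream measure) (count_space UNIV)"
  unfolding Hn_def by measurable

lemma pos_neg_integral:
  fixes f :: "'a \<Rightarrow> real"
  assumes f: "integrable M f"
  shows "enn2ereal (\<integral>\<^sup>+x. ennreal (max 0 (f x)) \<partial>M) - enn2ereal (\<integral>\<^sup>+x. ennreal (max 0 (- f x)) \<partial>M)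
     = ereal (\<integral>x. f x \<partial>M)"
proof -
  have i1: "integrable M (\<lambda>x. max 0 (f x))" by (intro integrable_max f) simp
  have i2: "integrable M (\<lambda>x. max 0 (- f x))" by (intro integrable_max integrable_minus f) simp
  have e1: "(\<integral>\<^sup>+x. ennreal (max 0 (f x)) \<partial>M) = ennreal (\<integral>x. max 0 (f x) \<partial>M)"
    by (rule nn_integral_eq_integral[OF i1]) simp
  have e2: "(\<integral>\<^sup>+x. ennreal (max 0 (- f x)) \<partial>M) = ennreal (\<integral>x. max 0 (- f x) \<partial>M)"
    by (rule nn_integral_eq_integral[OF i2]) simp
  have "(\<integral>x. f x \<partial>M) = (\<integral>x. max 0 (f x) - max 0 (- f x) \<partial>M)"
    by (rule Bochner_Integration.integral_cong) auto
  also have "\<dots> = (\<integral>x. max 0 (f x) \<partial>M) - (\<integral>x. max 0 (- f x) \<partial>M)"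
    by (rule Bochner_Integration.integral_diff[OF i1 i2])
  finally show ?thesis
    unfolding e1 e2 by (simp add: integral_nonneg_AE)
qed

lemma mc_upper:
  fixes K :: "'v::finite \<Rightarrow> 'v pmf" and \<phi> :: "'v \<Rightarrow> real"
  assumes closed: "\<And>u. u \<in> A \<Longrightarrow> set_pmf (K u) \<subseteq> A"
    and phiT: "\<And>t. t \<in> T \<Longrightarrow> \<phi> t = 0"
    and pot: "\<And>u. u \<in> A \<Longrightarrow> u \<notin> T \<Longrightarrow> (\<integral>u'. real_of_int (w (u,u')) + \<phi> u' \<partial>measure_pmf (K u)) \<le> \<phi> u"
    and hterm: "\<And>u. u \<in> A \<Longrightarrow> pN K T m u \<le> q" and q1: "q < 1"
    and vA: "v \<in> A"
  shows "exp_TP T w (mc_paths K v) \<le> ereal (\<phi> v)"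
proof -
  interpret prob_space "mc_paths K v" by (rule prob_mc)
  have q0: "0 \<le> q" using hterm[OF vA] pN_nonneg[where K=K and T=T and N=m and u=v] by linarith
  have m0: "m \<noteq> 0" using hterm[OF vA] q1 pN_0[where K=K and T=T and u=v] by (cases m) auto
  have pow: "pN K T (j * m) v \<le> q ^ j" for j by (rule pN_pow[OF closed hterm q0 vA])
  let ?NV = "{s \<in> space (mc_paths K v). \<forall>n. s !! n \<notin> T}"
  have NVs: "?NV \<in> sets (mc_paths K v)" by simp
  have NVj: "measure (mc_paths K v) ?NV \<le> q ^ j" for j
  proof -
    have "?NV \<subseteq> NT T (j * m)" by (auto simp: NT_def)
    then have "measure (mc_paths K v) ?NV \<le> pN K T (j * m) v"
      by (intro finite_measure_mono) auto
    then show ?thesis using pow[of j] by linarith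
  qed
  have "measure (mc_paths K v) ?NV \<le> 0"
    by (rule LIMSEQ_le_const[OF LIMSEQ_power_zero[of q]]) (use q0 q1 NVj in auto)
  then have NV0: "emeasure (mc_paths K v) ?NV = 0"
    using NVs by (simp add: emeasure_eq_measure measure_nonneg antisym)
  have AEreach: "AE s in mc_paths K v. \<exists>n. s !! n \<in> T"
    by (rule AE_I'[of ?NV]) (use NV0 NVs in auto)
  define S where "S L = (\<Sum>N<L. pN K T N v)" for L
  have geo: "pN K T (m + N) v \<le> q * pN K T N v" for N
    using pN_geom[OF closed hterm vA, of N] by (simp add: mult.commute)
  have Sm: "S (m + L) = S m + (\<Sum>N<L. pN K T (m + N) v)" for L
    by (induction L) (simp_all add: S_def)
  have Sm1: "S m \<le> real m"
    unfolding S_def using sum_bounded_above[of "{..<m}" "\<lambda>N. pN K T N v" 1] pN_le1 by auto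
  have Sm2: "(\<Sum>N<L. pN K T (m + N) v) \<le> q * S L" for L
    unfolding S_def sum_distrib_left by (rule sum_mono) (rule geo)
  have Smono: "S L \<le> S (m + L)" for L
    unfolding S_def by (rule sum_mono2) auto
  have Sb: "S L \<le> real m / (1 - q)" for L
  proof -
    have "S (m + L) \<le> real m + q * S (m + L)"
      using Sm[of L] Sm1 Sm2[of L] Smono[of L] q0 mult_left_mono[OF Smono[of L] q0] by linarith
    then have "(1 - q) * S (m + L) \<le> real m" by (simp add: algebra_simps)
    then have "S (m + L) \<le> real m / (1 - q)" using q1 by (simp add: pos_le_divide_eq mult.commute)
    then show ?thesis using Smono[of L] by linarith
  qed
  have summ: "summable (\<lambda>N. pN K T (Suc N) v)"
  proof (rule summableI_nonneg_bounded)
    fix n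
    have "(\<Sum>N<n. pN K T (Suc N) v) \<le> S (Suc n)"
      unfolding S_def sum.lessThan_Suc_shift using pN_nonneg[where K=K and T=T and N=0 and u=v] by simp
    then show "(\<Sum>N<n. pN K T (Suc N) v) \<le> real m / (1 - q)" using Sb[of "Suc n"] by linarith
  qed simp
  have Hle: "ennreal (real (Hn T s)) \<le> (\<Sum>N. indicator (NT T (Suc N)) s)" for s
  proof -
    have "ennreal (real (Hn T s)) = (\<Sum>N<Hn T s. indicator (NT T (Suc N)) s)"
    proof -
      have "s \<in> NT T (Suc N)" if a: "N < Hn T s" for N
      proof -
        have r: "\<exists>n. s !! n \<in> T" using a by (auto simp: Hn_def split: if_splits)
        show ?thesis unfolding NT_def
        proof (intro CollectI allI impI)
          fix i assume "i < Suc N"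
          then have "i < (LEAST n. s !! n \<in> T)" using a r by (simp add: Hn_def)
          then show "s !! i \<notin> T" by (rule not_less_Least)
        qed
      qed
      then have "(\<Sum>N<Hn T s. indicator (NT T (Suc N)) s :: ennreal) = (\<Sum>N<Hn T s. 1)"
        by (intro sum.cong) auto
      then show ?thesis by (simp add: ennreal_of_nat_eq_real_of_nat)
    qed
    also have "\<dots> \<le> (\<Sum>N. indicator (NT T (Suc N)) s)"
      by (metis add.commute le_iff_add suminf_offset summableI)
    finally show ?thesis .
  qed
  have "(\<integral>\<^sup>+s. ennreal (norm (real (Hn T s))) \<partial>mc_paths K v) \<le> (\<integral>\<^sup>+s. (\<Sum>N. indicator (NT T (Suc N)) s) \<partial>mc_paths K v)"
    by (rule nn_integral_mono) (simp add: Hle)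
  also have "\<dots> = (\<Sum>N. emeasure (mc_paths K v) (NT T (Suc N)))"
    by (subst nn_integral_suminf) (auto simp: borel_measurable_indicator)
  also have "\<dots> = (\<Sum>N. ennreal (pN K T (Suc N) v))"
    by (simp add: emeasure_eq_measure)
  also have "\<dots> = ennreal (\<Sum>N. pN K T (Suc N) v)"
    by (rule suminf_ennreal2[OF _ summ]) simp
  also have "\<dots> < \<infinity>" by simp
  finally have Hint: "integrable (mc_paths K v) (\<lambda>s. real (Hn T s))"
    by (intro integrableI_bounded) auto
  define Bw where "Bw = (\<Sum>x\<in>UNIV. \<bar>real_of_int (w x)\<bar>)"
  define Bp where "Bp = (\<Sum>u\<in>UNIV. \<bar>\<phi> u\<bar>)"
  have Bw: "\<bar>real_of_int (w x)\<bar> \<le> Bw" for x unfolding Bw_def by (rule member_le_sum) auto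
  have Bp: "\<bar>\<phi> x\<bar> \<le> Bp" for x unfolding Bp_def by (rule member_le_sum) auto
  have Bw0: "0 \<le> Bw" using Bw[of undefined] by linarith
  let ?TPr = "\<lambda>s. real_of_ereal (TP T w (snth s))"
  have key: "\<bar>Gf T w \<phi> N s\<bar> \<le> Bw * real (Hn T s) + Bp \<and> (N \<ge> Hn T s \<longrightarrow> Gf T w \<phi> N s = ?TPr s)"
    if reach: "\<exists>n. s !! n \<in> T" for s N
  proof -
    define H where "H = (LEAST n. s !! n \<in> T)"
    have HH: "Hn T s = H" using reach by (simp add: Hn_def H_def)
    have HT: "s !! H \<in> T" unfolding H_def using reach by (rule LeastI_ex)
    have Hb: "i < H \<Longrightarrow> s !! i \<notin> T" for i unfolding H_def by (rule not_less_Least)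
    define k where "k = min N H"
    have G: "Gf T w \<phi> N s = (\<Sum>i<k. real_of_int (w (s !! i, s !! Suc i))) + \<phi> (s !! k)"
      by (rule Gf_eq) (auto simp: k_def Hb min_def HT)
    have "\<bar>\<Sum>i<k. real_of_int (w (s !! i, s !! Suc i))\<bar> \<le> (\<Sum>i<k. Bw)"
      by (rule order.trans[OF sum_abs sum_mono]) (rule Bw)
    also have "\<dots> \<le> Bw * real H" using Bw0 by (simp add: k_def mult.commute mult_left_mono)
    finally have b1: "\<bar>\<Sum>i<k. real_of_int (w (s !! i, s !! Suc i))\<bar> \<le> Bw * real H" .
    have p1: "\<bar>Gf T w \<phi> N s\<bar> \<le> Bw * real (Hn T s) + Bp"
      unfolding G HH using b1 Bp[of "s !! k"] by linarith
    have p2: "Gf T w \<phi> N s = ?TPr s" if "N \<ge> Hn T s"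
    proof -
      have "k = H" using that HH by (simp add: k_def)
      then have "Gf T w \<phi> N s = (\<Sum>i<H. real_of_int (w (s !! i, s !! Suc i)))"
        using G phiT[OF HT] by simp
      also have "\<dots> = ?TPr s"
        using reach by (simp add: TP_def H_def)
      finally show ?thesis .
    qed
    show ?thesis using p1 p2 by blast
  qed
  have lim: "(\<lambda>N. \<integral>s. Gf T w \<phi> N s \<partial>mc_paths K v) \<longlonglongrightarrow> (\<integral>s. ?TPr s \<partial>mc_paths K v)"
  proof (rule integral_dominated_convergence[where w="\<lambda>s. Bw * real (Hn T s) + Bp"])
    show "integrable (mc_paths K v) (\<lambda>s. Bw * real (Hn T s) + Bp)"
      using Hint by simp
    show "AE s in mc_paths K v. (\<lambda>N. Gf T w \<phi> N s) \<longlonglongrightarrow> ?TPr s"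
      using AEreach
    proof (rule AE_mp, intro AE_I2 impI)
      fix s assume r: "\<exists>n. s !! n \<in> T"
      show "(\<lambda>N. Gf T w \<phi> N s) \<longlonglongrightarrow> ?TPr s"
        by (rule tendsto_eventually, rule eventually_sequentiallyI[of "Hn T s"]) (use key[OF r] in blast)
    qed
    show "AE s in mc_paths K v. norm (Gf T w \<phi> N s) \<le> Bw * real (Hn T s) + Bp" for N
      using AEreach by (rule AE_mp) (use key in auto)
  qed simp_all
  have int_le: "(\<integral>s. ?TPr s \<partial>mc_paths K v) \<le> \<phi> v"
    by (rule LIMSEQ_le_const2[OF lim]) (use Gf_exp[OF closed pot vA] in auto)
  have TPint: "integrable (mc_paths K v) ?TPr"
  proof (rule integrable_dominated_convergence[where w="\<lambda>s. Bw * real (Hn T s) + Bp" and s="\<lambda>N. Gf T w \<phi> N"])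
    show "integrable (mc_paths K v) (\<lambda>s. Bw * real (Hn T s) + Bp)"
      using Hint by simp
    show "AE s in mc_paths K v. (\<lambda>N. Gf T w \<phi> N s) \<longlonglongrightarrow> ?TPr s"
      using AEreach
    proof (rule AE_mp, intro AE_I2 impI)
      fix s assume r: "\<exists>n. s !! n \<in> T"
      show "(\<lambda>N. Gf T w \<phi> N s) \<longlonglongrightarrow> ?TPr s"
        by (rule tendsto_eventually, rule eventually_sequentiallyI[of "Hn T s"]) (use key[OF r] in blast)
    qed
    show "AE s in mc_paths K v. norm (Gf T w \<phi> N s) \<le> Bw * real (Hn T s) + Bp" for N
      using AEreach by (rule AE_mp) (use key in auto)
  qed simp_all
  have "exp_TP T w (mc_paths K v) = ereal (\<integral>s. ?TPr s \<partial>mc_paths K v)"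
    unfolding exp_TP_def using NV0 pos_neg_integral[OF TPint] by simp
  then show ?thesis using int_le by simp
qed

lemma ennreal_posneg_aux:
  fixes f r :: real
  assumes "r \<le> f"
  shows "ennreal (max 0 (- f)) + ennreal (max 0 r) \<le> ennreal (max 0 f) + ennreal (max 0 (- r))"
proof -
  have "ennreal (max 0 (- f)) + ennreal (max 0 r) = ennreal (max 0 (- f) + max 0 r)"
    by (rule ennreal_plus[symmetric]) auto
  also have "\<dots> \<le> ennreal (max 0 f + max 0 (- r))"
    using assms by (intro ennreal_leI) linarith
  also have "\<dots> = ennreal (max 0 f) + ennreal (max 0 (- r))"
    by (rule ennreal_plus) auto
  finally show ?thesis .
qed

lemma mc_lower:
  fixes K :: "'v::finite \<Rightarrow> 'v pmf" and X0 :: ereal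
  assumes ae: "AE s in mc_paths K v. X0 \<le> TP T w (snth s)"
  shows "X0 \<le> exp_TP T w (mc_paths K v)"
proof -
  interpret prob_space "mc_paths K v" by (rule prob_mc)
  let ?NV = "{s \<in> space (mc_paths K v). \<forall>n. s !! n \<notin> T}"
  let ?f = "\<lambda>s. real_of_ereal (TP T w (snth s))"
  show ?thesis
  proof (cases "emeasure (mc_paths K v) ?NV = 0")
    case False then show ?thesis by (simp add: exp_TP_def)
  next
    case NV0: True
    have NVs: "?NV \<in> sets (mc_paths K v)" by simp
    have AEreach: "AE s in mc_paths K v. \<exists>n. s !! n \<in> T"
      by (rule AE_I'[of ?NV]) (use NV0 NVs in auto)
    have ex: "exp_TP T w (mc_paths K v) =
      enn2ereal (\<integral>\<^sup>+s. ennreal (max 0 (?f s)) \<partial>mc_paths K v) - enn2ereal (\<integral>\<^sup>+s. ennreal (max 0 (- ?f s)) \<partial>mc_paths K v)"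
      using NV0 by (simp add: exp_TP_def)
    show ?thesis
    proof (cases X0)
      case MInf then show ?thesis by simp
    next
      case PInf
      have "AE s in mc_paths K v. False"
        using AEreach ae
      proof (eventually_elim)
        case (elim s)
        then show False using PInf by (auto simp: TP_def)
      qed
      then show ?thesis by simp
    next
      case (real r)
      have fr: "AE s in mc_paths K v. r \<le> ?f s"
        using AEreach ae
      proof (eventually_elim)
        case (elim s)
        then show ?case using real by (auto simp: TP_def)
      qed
      have fm[measurable]: "?f \<in> borel_measurable (mc_paths K v)"
        using TPr_meas[of T w] by (simp add: measurable_cong_sets[OF sets_mc refl])
      let ?A = "\<integral>\<^sup>+s. ennreal (max 0 (?f s)) \<partial>mc_paths K v"
      let ?B = "\<integral>\<^sup>+s. ennreal (max 0 (- ?f s)) \<partial>mc_paths K v"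
      have Bb: "?B \<le> ennreal (max 0 (- r))"
      proof -
        have "?B \<le> (\<integral>\<^sup>+s. ennreal (max 0 (- r)) \<partial>mc_paths K v)"
          using fr by (intro nn_integral_mono_AE) (auto elim!: eventually_mono intro!: ennreal_leI)
        also have "\<dots> = ennreal (max 0 (- r))" by (simp add: emeasure_space_1)
        finally show ?thesis .
      qed
      have "(\<integral>\<^sup>+s. ennreal (max 0 (- ?f s)) + ennreal (max 0 r) \<partial>mc_paths K v)
          \<le> (\<integral>\<^sup>+s. ennreal (max 0 (?f s)) + ennreal (max 0 (- r)) \<partial>mc_paths K v)"
        by (rule nn_integral_mono_AE, rule eventually_mono[OF fr]) (rule ennreal_posneg_aux)
      then have ineq: "?B + ennreal (max 0 r) \<le> ?A + ennreal (max 0 (- r))"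
        by (subst (asm) (1 2) nn_integral_add) (auto simp: emeasure_space_1)
      obtain b where b: "?B = ennreal b" "0 \<le> b"
        using Bb by (cases "?B") (auto simp: top_unique)
      show ?thesis
      proof (cases "?A = \<infinity>")
        case True then show ?thesis using b by (simp add: ex)
      next
        case False
        then obtain a where a: "?A = ennreal a" "0 \<le> a" by (cases "?A") auto
        have "ennreal (b + max 0 r) \<le> ennreal (a + max 0 (- r))"
          using ineq a b by (simp add: ennreal_plus)
        then have "b + max 0 r \<le> a + max 0 (- r)"
          using a(2) by (subst (asm) ennreal_le_iff) auto
        then have "r \<le> a - b" by linarith
        then show ?thesis using a b real by (simp add: ex)
      qed
    qed
  qed
qed


lemma INF_add_const_ge: "ereal c + (INF i. f i :: ereal) \<le> (INF i. ereal c + f i)"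
  by (rule INF_greatest, rule add_left_mono, rule INF_lower) simp

lemma ereal_cancel_aux: "ereal c + (ereal (- c) + x) = x"
  by (cases x) auto

lemma INF_add_const: "(INF i. ereal c + f i) = ereal c + (INF i. f i :: ereal)"
proof (rule antisym)
  have "ereal (- c) + (INF i. ereal c + f i) \<le> (INF i. ereal (- c) + (ereal c + f i))"
    by (rule INF_add_const_ge)
  also have "\<dots> = (INF i. f i)"
    using ereal_cancel_aux[of "-c"] by simp
  finally have "ereal c + (ereal (- c) + (INF i. ereal c + f i)) \<le> ereal c + (INF i. f i)"
    by (rule add_left_mono)
  then show "(INF i. ereal c + f i) \<le> ereal c + (INF i. f i)"
    by (simp only: ereal_cancel_aux)
qed (rule INF_add_const_ge)

lemma Min_image_mono:
  fixes f g :: "'a \<Rightarrow> 'b::linorder"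
  assumes "finite S" "S \<noteq> {}" "\<And>x. x \<in> S \<Longrightarrow> f x \<le> g x"
  shows "Min (f ` S) \<le> Min (g ` S)"
proof -
  have "Min (g ` S) \<in> g ` S" by (rule Min_in) (use assms in auto)
  then obtain x where x: "x \<in> S" "Min (g ` S) = g x" by auto
  have "Min (f ` S) \<le> f x" using x assms by (intro Min_le) auto
  also have "\<dots> \<le> g x" using x assms by auto
  finally show ?thesis using x by simp
qed

lemma Max_image_mono:
  fixes f g :: "'a \<Rightarrow> 'b::linorder"
  assumes "finite S" "S \<noteq> {}" "\<And>x. x \<in> S \<Longrightarrow> f x \<le> g x"
  shows "Max (f ` S) \<le> Max (g ` S)"
proof -
  have "Max (f ` S) \<in> f ` S" by (rule Max_in) (use assms in auto)
  then obtain x where x: "x \<in> S" "Max (f ` S) = f x" by auto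
  have "g x \<le> Max (g ` S)" using x assms by (intro Max_ge) auto
  then show ?thesis using x assms by (metis order.trans)
qed

locale game =
  fixes VMax VMin T :: "'v::finite set" and E :: "('v \<times> 'v) set" and w :: "'v \<times> 'v \<Rightarrow> int"
  assumes spg: "spg VMax VMin T E"
begin

definition succ :: "'v \<Rightarrow> 'v set" where "succ u = {u'. (u, u') \<in> E}"

lemma succ_fin[simp]: "finite (succ u)" by simp

lemma succ_ne: "u \<notin> T \<Longrightarrow> succ u \<noteq> {}"
  using spg by (auto simp: spg_def succ_def)

lemma part: "u \<in> T \<or> u \<in> VMin \<or> u \<in> VMax"
  using spg by (auto simp: spg_def)

lemma disj: "u \<in> VMin \<Longrightarrow> u \<notin> T" "u \<in> VMax \<Longrightarrow> u \<notin> T" "u \<in> VMin \<Longrightarrow> u \<notin> VMax"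
  using spg by (auto simp: spg_def)

lemma notT_cases: "u \<notin> T \<Longrightarrow> (u \<in> VMin \<Longrightarrow> P) \<Longrightarrow> (u \<in> VMax \<Longrightarrow> u \<notin> VMin \<Longrightarrow> P) \<Longrightarrow> P"
  using part disj by blast

fun Xv :: "nat \<Rightarrow> 'v \<Rightarrow> ereal" where
  "Xv 0 u = (if u \<in> T then 0 else \<infinity>)"
| "Xv (Suc k) u = (if u \<in> T then 0 else if u \<in> VMin
      then Min ((\<lambda>u'. ereal (real_of_int (w (u, u'))) + Xv k u') ` succ u)
      else Max ((\<lambda>u'. ereal (real_of_int (w (u, u'))) + Xv k u') ` succ u))"

lemma Xv_T: "u \<in> T \<Longrightarrow> Xv k u = 0"
  by (cases k) auto

lemma Xv_min_le: "u \<in> VMin \<Longrightarrow> u' \<in> succ u \<Longrightarrow> Xv (Suc k) u \<le> ereal (real_of_int (w (u, u'))) + Xv k u'"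
  using disj by (auto intro!: Min_le)

lemma Xv_min_ex: "u \<in> VMin \<Longrightarrow> \<exists>u'\<in>succ u. Xv (Suc k) u = ereal (real_of_int (w (u, u'))) + Xv k u'"
proof -
  assume u: "u \<in> VMin"
  then have "u \<notin> T" by (rule disj)
  then have "Min ((\<lambda>u'. ereal (real_of_int (w (u, u'))) + Xv k u') ` succ u) \<in> (\<lambda>u'. ereal (real_of_int (w (u, u'))) + Xv k u') ` succ u"
    using succ_ne by (intro Min_in) auto
  then show ?thesis using u \<open>u \<notin> T\<close> by auto
qed

lemma Xv_max_ge: "u \<notin> T \<Longrightarrow> u \<notin> VMin \<Longrightarrow> u' \<in> succ u \<Longrightarrow> ereal (real_of_int (w (u, u'))) + Xv k u' \<le> Xv (Suc k) u"
  by (auto intro!: Max_ge)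

lemma Xv_max_ex: "u \<notin> T \<Longrightarrow> u \<notin> VMin \<Longrightarrow> \<exists>u'\<in>succ u. Xv (Suc k) u = ereal (real_of_int (w (u, u'))) + Xv k u'"
proof -
  assume u: "u \<notin> T" "u \<notin> VMin"
  then have "Max ((\<lambda>u'. ereal (real_of_int (w (u, u'))) + Xv k u') ` succ u) \<in> (\<lambda>u'. ereal (real_of_int (w (u, u'))) + Xv k u') ` succ u"
    using succ_ne by (intro Max_in) auto
  then show ?thesis using u by auto
qed

definition isint :: "ereal \<Rightarrow> bool" where
  "isint x \<longleftrightarrow> x = \<infinity> \<or> (\<exists>z::int. x = ereal (real_of_int z))"

lemma Xv_int: "isint (Xv k u)"
proof (induction k arbitrary: u)
  case 0 then show ?case by (auto simp: isint_def intro: exI[of _ 0])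
next
  case (Suc k)
  have add: "isint (ereal (real_of_int (w (u, u'))) + Xv k u')" for u'
    using Suc[of u'] by (auto simp: isint_def intro: exI[of _ "w (u,u') + z" for z])
  show ?case
  proof (cases "u \<in> T")
    case True then show ?thesis by (auto simp: isint_def intro: exI[of _ 0])
  next
    case False
    show ?thesis
    proof (cases "u \<in> VMin")
      case True
      obtain u' where "Xv (Suc k) u = ereal (real_of_int (w (u, u'))) + Xv k u'"
        using Xv_min_ex[OF True] by blast
      then show ?thesis using add by simp
    next
      case nm: False
      obtain u' where "Xv (Suc k) u = ereal (real_of_int (w (u, u'))) + Xv k u'"
        using Xv_max_ex[OF False nm] by blast
      then show ?thesis using add by simp
    qed
  qed
qed

lemma Xv_not_MInf: "Xv k u \<noteq> -\<infinity>"
  using Xv_int[of k u] by (auto simp: isint_def)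

lemma Xv_Suc_le: "Xv (Suc k) u \<le> Xv k u"
proof (induction k arbitrary: u)
  case 0 then show ?case by auto
next
  case (Suc k)
  show ?case
  proof (cases "u \<in> T")
    case True then show ?thesis by simp
  next
    case False
    show ?thesis
    proof (cases "u \<in> VMin")
      case True
      have "Min ((\<lambda>u'. ereal (real_of_int (w (u, u'))) + Xv (Suc k) u') ` succ u)
         \<le> Min ((\<lambda>u'. ereal (real_of_int (w (u, u'))) + Xv k u') ` succ u)"
        using succ_ne[OF False] Suc by (intro Min_image_mono add_left_mono) auto
      then show ?thesis using True False by simp
    next
      case nm: False
      have "Max ((\<lambda>u'. ereal (real_of_int (w (u, u'))) + Xv (Suc k) u') ` succ u)
         \<le> Max ((\<lambda>u'. ereal (real_of_int (w (u, u'))) + Xv k u') ` succ u)"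
        using succ_ne[OF False] Suc by (intro Max_image_mono add_left_mono) auto
      then show ?thesis using nm False by simp
    qed
  qed
qed

lemma Xv_anti: "j \<le> k \<Longrightarrow> Xv k u \<le> Xv j u"
proof (induction k rule: dec_induct)
  case base show ?case by simp
next
  case (step n) show ?case using Xv_Suc_le[of n u] step.IH by (rule order.trans)
qed

definition Xinf :: "'v \<Rightarrow> ereal" where "Xinf u = (INF k. Xv k u)"

lemma Xinf_le: "Xinf u \<le> Xv k u"
  unfolding Xinf_def by (rule INF_lower) simp

lemma Xinf_T: "u \<in> T \<Longrightarrow> Xinf u = 0"
  by (simp add: Xinf_def Xv_T)

lemma Xinf_min: "u \<in> VMin \<Longrightarrow> u' \<in> succ u \<Longrightarrow> Xinf u \<le> ereal (real_of_int (w (u, u'))) + Xinf u'"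
proof -
  assume a: "u \<in> VMin" "u' \<in> succ u"
  have "Xinf u \<le> (INF k. ereal (real_of_int (w (u, u'))) + Xv k u')"
  proof (rule INF_greatest)
    fix k
    have "Xinf u \<le> Xv (Suc k) u" by (rule Xinf_le)
    also have "\<dots> \<le> ereal (real_of_int (w (u, u'))) + Xv k u'" by (rule Xv_min_le[OF a])
    finally show "Xinf u \<le> ereal (real_of_int (w (u, u'))) + Xv k u'" .
  qed
  then show ?thesis by (simp add: INF_add_const Xinf_def)
qed

lemma Xinf_max: "u \<notin> T \<Longrightarrow> u \<notin> VMin \<Longrightarrow> \<exists>u'\<in>succ u. Xinf u \<le> ereal (real_of_int (w (u, u'))) + Xinf u'"
proof (rule ccontr)
  assume u: "u \<notin> T" "u \<notin> VMin" and c: "\<not> (\<exists>u'\<in>succ u. Xinf u \<le> ereal (real_of_int (w (u, u'))) + Xinf u')"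
  have "\<forall>u'\<in>succ u. \<exists>k. ereal (real_of_int (w (u, u'))) + Xv k u' < Xinf u"
  proof
    fix u' assume "u' \<in> succ u"
    then have h: "ereal (real_of_int (w (u, u'))) + Xinf u' < Xinf u"
      using c by (auto simp: not_le)
    have "(INF k. ereal (real_of_int (w (u, u'))) + Xv k u') < Xinf u"
      unfolding INF_add_const using h by (simp add: Xinf_def[of u'])
    then show "\<exists>k. ereal (real_of_int (w (u, u'))) + Xv k u' < Xinf u"
      by (simp add: INF_less_iff)
  qed
  then obtain kf where kf: "\<And>u'. u' \<in> succ u \<Longrightarrow> ereal (real_of_int (w (u, u'))) + Xv (kf u') u' < Xinf u"
    by metis
  define K where "K = Max (kf ` succ u)"
  have "ereal (real_of_int (w (u, u'))) + Xv K u' < Xinf u" if "u' \<in> succ u" for u'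
  proof -
    have "kf u' \<le> K" unfolding K_def using that by (intro Max_ge) auto
    then have "Xv K u' \<le> Xv (kf u') u'" by (rule Xv_anti)
    then have "ereal (real_of_int (w (u, u'))) + Xv K u' \<le> ereal (real_of_int (w (u, u'))) + Xv (kf u') u'"
      by (rule add_left_mono)
    then show ?thesis using kf[OF that] by (rule le_less_trans)
  qed
  moreover obtain u' where "u' \<in> succ u" "Xv (Suc K) u = ereal (real_of_int (w (u, u'))) + Xv K u'"
    using Xv_max_ex[OF u] by blast
  ultimately have "Xv (Suc K) u < Xinf u" by simp
  then show False using Xinf_le[of u "Suc K"] by simp
qed


lemma ereal_add_assoc_aux: "ereal a + (ereal b + z) = ereal (a + b) + z"
  by (cases z) auto

lemma TP_reach: "\<exists>n. x n \<in> T \<Longrightarrow> TP T w x = ereal (\<Sum>i<(LEAST n. x n \<in> T). real_of_int (w (x i, x (Suc i))))"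
  by (simp add: TP_def)

lemma tele_lower:
  assumes x0: "x 0 = v"
    and step: "\<And>i. x i \<notin> T \<Longrightarrow> Xinf (x i) \<le> ereal (real_of_int (w (x i, x (Suc i)))) + Xinf (x (Suc i))"
  shows "Xinf v \<le> TP T w x"
proof (cases "\<exists>n. x n \<in> T")
  case False then show ?thesis by (simp add: TP_def)
next
  case True
  define H where "H = (LEAST n. x n \<in> T)"
  have HT: "x H \<in> T" unfolding H_def using True by (rule LeastI_ex)
  have cl: "m \<le> H \<Longrightarrow> Xinf v \<le> ereal (\<Sum>i<m. real_of_int (w (x i, x (Suc i)))) + Xinf (x m)" for m
  proof (induction m)
    case 0 then show ?case by (simp add: x0)
  next
    case (Suc m)
    have "x m \<notin> T" using Suc.prems unfolding H_def by (intro not_less_Least) auto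
    have "Xinf v \<le> ereal (\<Sum>i<m. real_of_int (w (x i, x (Suc i)))) + Xinf (x m)"
      using Suc by simp
    also have "\<dots> \<le> ereal (\<Sum>i<m. real_of_int (w (x i, x (Suc i)))) + (ereal (real_of_int (w (x m, x (Suc m)))) + Xinf (x (Suc m)))"
      by (rule add_left_mono, rule step) fact
    also have "\<dots> = ereal (\<Sum>i<Suc m. real_of_int (w (x i, x (Suc i)))) + Xinf (x (Suc m))"
      by (simp add: ereal_add_assoc_aux)
    finally show ?case .
  qed
  have "TP T w x = ereal (\<Sum>i<H. real_of_int (w (x i, x (Suc i))))"
    unfolding H_def by (rule TP_reach[OF True])
  then show ?thesis using cl[of H] Xinf_T[OF HT] by simp
qed

definition tstar :: "'v \<Rightarrow> 'v" where
  "tstar u = (SOME u'. u' \<in> succ u \<and> Xinf u \<le> ereal (real_of_int (w (u, u'))) + Xinf u')"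

lemma tstar: "u \<notin> T \<Longrightarrow> u \<notin> VMin \<Longrightarrow> tstar u \<in> succ u \<and> Xinf u \<le> ereal (real_of_int (w (u, tstar u))) + Xinf (tstar u)"
  unfolding tstar_def by (rule someI_ex) (use Xinf_max in blast)

lemma tstar_VMax: "u \<in> VMax \<Longrightarrow> tstar u \<in> succ u"
  using tstar disj by blast

lemma det_hist_ne: "det_hist VMin T \<sigma> \<tau> v i \<noteq> []"
  by (cases i) auto

lemma length_det_hist: "length (det_hist VMin T \<sigma> \<tau> v i) = Suc i"
  by (induction i) auto

lemma out_0: "out VMin T v \<sigma> \<tau> 0 = v"
  by (simp add: out_def)

lemma out_Suc: "out VMin T v \<sigma> \<tau> (Suc i) = det_step VMin T \<sigma> \<tau> (det_hist VMin T \<sigma> \<tau> v i)"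
  by (simp add: out_def)

lemma last_det_hist: "last (det_hist VMin T \<sigma> \<tau> v i) = out VMin T v \<sigma> \<tau> i"
  by (simp add: out_def)

lemma lower_d: "Xinf v \<le> Val_d VMax VMin T E w v"
  unfolding Val_d_def
proof (rule INF_greatest)
  fix \<sigma> assume "\<sigma> \<in> {\<sigma>. det_strategy VMin E \<sigma>}"
  then have \<sigma>: "det_strategy VMin E \<sigma>" by simp
  define \<tau> where "\<tau> = (\<lambda>h. tstar (last h))"
  have \<tau>s: "det_strategy VMax E \<tau>"
    unfolding det_strategy_def \<tau>_def using tstar_VMax by (auto simp: succ_def)
  let ?x = "out VMin T v \<sigma> \<tau>"
  have "Xinf v \<le> TP T w ?x"
  proof (rule tele_lower)
    show "?x 0 = v" by (rule out_0)
  next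
    fix i assume nT: "?x i \<notin> T"
    let ?h = "det_hist VMin T \<sigma> \<tau> v i"
    have xs: "?x (Suc i) = (if ?x i \<in> T then ?x i else if ?x i \<in> VMin then \<sigma> ?h else \<tau> ?h)"
      by (simp only: out_Suc det_step_def last_det_hist)
    show "Xinf (?x i) \<le> ereal (real_of_int (w (?x i, ?x (Suc i)))) + Xinf (?x (Suc i))"
    proof (cases "?x i \<in> VMin")
      case True
      have "?x (Suc i) = \<sigma> ?h" using nT True xs by simp
      moreover have "(last ?h, \<sigma> ?h) \<in> E"
      proof -
        have hc: "?h \<noteq> [] \<and> last ?h \<in> VMin" using det_hist_ne[of \<sigma> \<tau> v i] True by (simp add: last_det_hist)
        then show ?thesis using \<sigma> unfolding det_strategy_def by blast
      qed
      ultimately have "?x (Suc i) \<in> succ (?x i)" by (simp only: succ_def last_det_hist mem_Collect_eq)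
      then show ?thesis by (rule Xinf_min[OF True])
    next
      case False
      have "?x (Suc i) = \<tau> ?h" using nT False xs by simp
      also have "\<dots> = tstar (?x i)" by (simp only: \<tau>_def last_det_hist)
      finally have eq: "?x (Suc i) = tstar (?x i)" .
      show ?thesis using tstar[OF nT False] by (simp only: eq)
    qed
  qed
  also have "\<dots> \<le> Val_sigma VMax VMin T E w \<sigma> v"
    unfolding Val_sigma_def by (rule SUP_upper) (simp add: \<tau>s)
  finally show "Xinf v \<le> Val_sigma VMax VMin T E w \<sigma> v" .
qed

lemma lower_m:
  assumes \<rho>: "mless_strategy VMin E \<rho>"
  shows "Xinf v \<le> Val_m_rho VMax VMin T E w \<rho> v"
proof -
  define \<tau> where "\<tau> = (\<lambda>u. return_pmf (tstar u))"
  have \<tau>s: "mless_strategy VMax E \<tau>"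
    unfolding mless_strategy_def \<tau>_def using tstar_VMax by (auto simp: succ_def)
  let ?K = "mc_kernel VMin T \<rho> \<tau>"
  have "Xinf v \<le> exp_TP T w (mc_paths ?K v)"
  proof (rule mc_lower)
    show "AE s in mc_paths ?K v. Xinf v \<le> TP T w ((!!) s)"
      using AE_good[of ?K v]
    proof (rule AE_mp, intro AE_I2 impI)
      fix s assume g: "good ?K v s"
      show "Xinf v \<le> TP T w ((!!) s)"
      proof (rule tele_lower)
        show "s !! 0 = v" using g by (simp add: good_def)
      next
        fix i assume nT: "s !! i \<notin> T"
        have sup: "s !! Suc i \<in> set_pmf (?K (s !! i))" using g by (simp add: good_def)
        show "Xinf (s !! i) \<le> ereal (real_of_int (w (s !! i, s !! Suc i))) + Xinf (s !! Suc i)"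
        proof (cases "s !! i \<in> VMin")
          case True
          have "?K (s !! i) = \<rho> (s !! i)" using nT True by (simp add: mc_kernel_def)
          then have "s !! Suc i \<in> set_pmf (\<rho> (s !! i))" using sup by simp
          then have "s !! Suc i \<in> succ (s !! i)"
            using \<rho> True unfolding mless_strategy_def succ_def by blast
          then show ?thesis by (rule Xinf_min[OF True])
        next
          case False
          have "?K (s !! i) = return_pmf (tstar (s !! i))" using nT False by (simp add: mc_kernel_def \<tau>_def)
          then have eq: "s !! Suc i = tstar (s !! i)" using sup by simp
          show ?thesis using tstar[OF nT False] by (simp only: eq)
        qed
      qed
    qed
  qed
  also have "\<dots> \<le> Val_m_rho VMax VMin T E w \<rho> v"
    unfolding Val_m_rho_def by (rule SUP_upper) (simp add: \<tau>s)
  finally show ?thesis .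
qed


definition amin :: "nat \<Rightarrow> 'v \<Rightarrow> 'v" where
  "amin j u = (SOME u'. u' \<in> succ u \<and> Xv (Suc j) u = ereal (real_of_int (w (u, u'))) + Xv j u')"

definition dflt :: "'v \<Rightarrow> 'v" where "dflt u = (SOME u'. u' \<in> succ u)"

lemma amin: "u \<in> VMin \<Longrightarrow> amin j u \<in> succ u \<and> Xv (Suc j) u = ereal (real_of_int (w (u, amin j u))) + Xv j (amin j u)"
  unfolding amin_def by (rule someI_ex) (use Xv_min_ex in blast)

lemma dflt: "u \<notin> T \<Longrightarrow> dflt u \<in> succ u"
  unfolding dflt_def using succ_ne by (simp add: some_in_eq)

definition sig :: "nat \<Rightarrow> 'v list \<Rightarrow> 'v" where
  "sig k h = (if length h \<le> k \<and> last h \<in> VMin then amin (k - length h) (last h) else dflt (last h))"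

lemma sig_strat: "det_strategy VMin E (sig k)"
  unfolding det_strategy_def
proof (intro allI impI)
  fix h :: "'v list" assume h: "h \<noteq> [] \<and> last h \<in> VMin"
  then have "sig k h \<in> succ (last h)"
    using amin[of "last h"] dflt[of "last h"] disj(1)[of "last h"] by (auto simp: sig_def)
  then show "(last h, sig k h) \<in> E" by (simp add: succ_def)
qed

lemma tele_upper:
  assumes x0: "x 0 = v" and fin: "Xv k v < \<infinity>"
    and step: "\<And>i. i < k \<Longrightarrow> x i \<notin> T \<Longrightarrow>
        ereal (real_of_int (w (x i, x (Suc i)))) + Xv (k - Suc i) (x (Suc i)) \<le> Xv (k - i) (x i)"
  shows "TP T w x \<le> Xv k v"
proof -
  have cl: "m \<le> k \<Longrightarrow> (\<forall>i<m. x i \<notin> T) \<Longrightarrow> ereal (\<Sum>i<m. real_of_int (w (x i, x (Suc i)))) + Xv (k - m) (x m) \<le> Xv k v" for m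
  proof (induction m)
    case 0 then show ?case by (simp add: x0)
  next
    case (Suc m)
    have "ereal (\<Sum>i<Suc m. real_of_int (w (x i, x (Suc i)))) + Xv (k - Suc m) (x (Suc m))
        = ereal (\<Sum>i<m. real_of_int (w (x i, x (Suc i)))) + (ereal (real_of_int (w (x m, x (Suc m)))) + Xv (k - Suc m) (x (Suc m)))"
      by (simp add: ereal_add_assoc_aux)
    also have "\<dots> \<le> ereal (\<Sum>i<m. real_of_int (w (x i, x (Suc i)))) + Xv (k - m) (x m)"
      using Suc.prems by (intro add_left_mono step) auto
    also have "\<dots> \<le> Xv k v" using Suc by simp
    finally show ?case .
  qed
  have ex: "\<exists>n. x n \<in> T"
  proof (rule ccontr)
    assume "\<not> (\<exists>n. x n \<in> T)"
    then have "ereal (\<Sum>i<k. real_of_int (w (x i, x (Suc i)))) + Xv 0 (x k) \<le> Xv k v"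
      using cl[of k] by auto
    then show False using fin \<open>\<not> (\<exists>n. x n \<in> T)\<close> by simp
  qed
  define H where "H = (LEAST n. x n \<in> T)"
  have HT: "x H \<in> T" unfolding H_def using ex by (rule LeastI_ex)
  have Hk: "H \<le> k"
  proof (rule ccontr)
    assume "\<not> H \<le> k"
    have nl: "i < H \<Longrightarrow> x i \<notin> T" for i unfolding H_def by (rule not_less_Least)
    then have "\<forall>i<k. x i \<notin> T" "x k \<notin> T" using \<open>\<not> H \<le> k\<close> by auto
    then have "ereal (\<Sum>i<k. real_of_int (w (x i, x (Suc i)))) + Xv 0 (x k) \<le> Xv k v"
      using cl[of k] by auto
    then show False using fin \<open>x k \<notin> T\<close> by simp
  qed
  have "\<forall>i<H. x i \<notin> T" unfolding H_def using not_less_Least by blast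
  then have "ereal (\<Sum>i<H. real_of_int (w (x i, x (Suc i)))) + Xv (k - H) (x H) \<le> Xv k v"
    using cl[OF Hk] by auto
  moreover have "TP T w x = ereal (\<Sum>i<H. real_of_int (w (x i, x (Suc i))))"
    unfolding H_def by (rule TP_reach[OF ex])
  ultimately show ?thesis using Xv_T[OF HT] by simp
qed

lemma upper_d: "Val_d VMax VMin T E w v \<le> Xv k v"
proof (cases "Xv k v < \<infinity>")
  case False then show ?thesis by (simp add: not_less top_unique)
next
  case fin: True
  have "Val_d VMax VMin T E w v \<le> Val_sigma VMax VMin T E w (sig k) v"
    unfolding Val_d_def by (rule INF_lower) (simp add: sig_strat)
  also have "\<dots> \<le> Xv k v"
    unfolding Val_sigma_def
  proof (rule SUP_least)
    fix \<tau> assume "\<tau> \<in> {\<tau>. det_strategy VMax E \<tau>}"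
    then have \<tau>: "det_strategy VMax E \<tau>" by simp
    let ?x = "out VMin T v (sig k) \<tau>"
    show "TP T w ?x \<le> Xv k v"
    proof (rule tele_upper[where x="?x" and v=v and k=k, OF out_0 fin])
      fix i assume ik: "i < k" and nT: "?x i \<notin> T"
      let ?h = "det_hist VMin T (sig k) \<tau> v i"
      have xs: "?x (Suc i) = (if ?x i \<in> T then ?x i else if ?x i \<in> VMin then sig k ?h else \<tau> ?h)"
        by (simp only: out_Suc det_step_def last_det_hist)
      have kk: "k - i = Suc (k - Suc i)" using ik by simp
      show "ereal (real_of_int (w (?x i, ?x (Suc i)))) + Xv (k - Suc i) (?x (Suc i)) \<le> Xv (k - i) (?x i)"
      proof (cases "?x i \<in> VMin")
        case True
        have "sig k ?h = amin (k - Suc i) (?x i)"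
          using ik True by (simp add: sig_def length_det_hist last_det_hist)
        then have eq: "?x (Suc i) = amin (k - Suc i) (?x i)" using xs nT True by simp
        show ?thesis unfolding kk eq using amin[OF True, of "k - Suc i"] by simp
      next
        case False
        have eq: "?x (Suc i) = \<tau> ?h" using xs nT False by simp
        have "?x i \<in> VMax" using nT False part by blast
        then have hc: "?h \<noteq> [] \<and> last ?h \<in> VMax" using det_hist_ne[of "sig k" \<tau> v i] by (simp add: last_det_hist)
        then have "(last ?h, \<tau> ?h) \<in> E" using \<tau> unfolding det_strategy_def by blast
        then have "?x (Suc i) \<in> succ (?x i)" by (simp add: eq succ_def last_det_hist)
        then show ?thesis unfolding kk by (rule Xv_max_ge[OF nT False])
      qed
    qed
  qed
  finally show ?thesis .
qed

end


definition mix :: "real \<Rightarrow> 'a \<Rightarrow> 'a \<Rightarrow> 'a pmf" where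
  "mix \<delta> x y = map_pmf (\<lambda>b. if b then y else x) (bernoulli_pmf \<delta>)"

lemma set_mix: "set_pmf (mix \<delta> x y) \<subseteq> {x, y}"
  by (auto simp: mix_def)

lemma int_mix: "0 \<le> \<delta> \<Longrightarrow> \<delta> \<le> 1 \<Longrightarrow> (\<integral>z. (g z :: real) \<partial>measure_pmf (mix \<delta> x y)) = (1 - \<delta>) * g x + \<delta> * g y"
  by (simp add: mix_def integral_map_pmf integral_bernoulli_pmf algebra_simps)

context game begin

definition jj :: "nat \<Rightarrow> 'v \<Rightarrow> nat" where "jj k u = (LEAST j. Xv j u = Xv k u)"
definition lev :: "'v \<Rightarrow> nat" where "lev u = (LEAST l. Xv l u < \<infinity>)"
definition s1 :: "nat \<Rightarrow> 'v \<Rightarrow> 'v" where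
  "s1 k u = (SOME u'. u' \<in> succ u \<and> Xv (jj k u) u = ereal (real_of_int (w (u, u'))) + Xv (jj k u - 1) u')"
definition s2 :: "'v \<Rightarrow> 'v" where
  "s2 u = (SOME u'. u' \<in> succ u \<and> Xv (lev u - 1) u' < \<infinity>)"
definition phi :: "nat \<Rightarrow> real \<Rightarrow> 'v \<Rightarrow> real" where
  "phi k a u = (if Xv k u < \<infinity> then real_of_ereal (Xv k u) + a * real (jj k u) else 0)"

lemma jj: "jj k u \<le> k" "Xv (jj k u) u = Xv k u"
  unfolding jj_def by (auto intro: Least_le LeastI)

lemma jj_pos: "Xv k u < \<infinity> \<Longrightarrow> u \<notin> T \<Longrightarrow> 1 \<le> jj k u"
  using jj(2)[of k u] by (cases "jj k u") auto

lemma jj_T: "u \<in> T \<Longrightarrow> jj k u = 0"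
  unfolding jj_def by (rule Least_eq_0) (simp add: Xv_T)

lemma lev: assumes "Xv k u < \<infinity>" shows "lev u \<le> k \<and> Xv (lev u) u < \<infinity>"
proof
  show "lev u \<le> k" unfolding lev_def by (rule Least_le) (rule assms)
  show "Xv (lev u) u < \<infinity>" unfolding lev_def by (rule LeastI[of _ k]) (rule assms)
qed

lemma lev_pos: "u \<notin> T \<Longrightarrow> Xv k u < \<infinity> \<Longrightarrow> 1 \<le> lev u"
  using lev[of k u] by (cases "lev u") auto

lemma lev_le: "Xv l u < \<infinity> \<Longrightarrow> lev u \<le> l"
  unfolding lev_def by (rule Least_le)

lemma fin_of_sum: "ereal c + x < \<infinity> \<Longrightarrow> x < \<infinity>"
  by (cases x) auto

lemma s1: assumes "Xv k u < \<infinity>" "u \<in> VMin"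
  shows "s1 k u \<in> succ u \<and> Xv (jj k u) u = ereal (real_of_int (w (u, s1 k u))) + Xv (jj k u - 1) (s1 k u)"
proof -
  have "1 \<le> jj k u" using jj_pos assms disj by blast
  then have e: "Suc (jj k u - 1) = jj k u" by simp
  show ?thesis unfolding s1_def
    by (rule someI_ex) (use Xv_min_ex[OF assms(2), of "jj k u - 1"] e in auto)
qed

lemma s2: assumes "Xv k u < \<infinity>" "u \<in> VMin"
  shows "s2 u \<in> succ u \<and> Xv (lev u - 1) (s2 u) < \<infinity>"
proof -
  have "1 \<le> lev u" using lev_pos assms disj by blast
  then have e: "Suc (lev u - 1) = lev u" by simp
  obtain u' where u': "u' \<in> succ u" "Xv (lev u) u = ereal (real_of_int (w (u, u'))) + Xv (lev u - 1) u'"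
    using Xv_min_ex[OF assms(2), of "lev u - 1"] e by auto
  have "ereal (real_of_int (w (u, u'))) + Xv (lev u - 1) u' < \<infinity>" using lev[OF assms(1)] u'(2) by simp
  then have "Xv (lev u - 1) u' < \<infinity>" by (rule fin_of_sum)
  then show ?thesis unfolding s2_def
    by (intro someI_ex[of "\<lambda>u'. u' \<in> succ u \<and> Xv (lev u - 1) u' < \<infinity>"]) (use u' in auto)
qed

lemma s2_lev: assumes "Xv k u < \<infinity>" "u \<in> VMin"
  shows "lev (s2 u) \<le> lev u - 1"
  using s2[OF assms] by (intro lev_le) auto

lemma max_succ_lev: assumes "Xv k u < \<infinity>" "u \<notin> T" "u \<notin> VMin" "u' \<in> succ u"
  shows "Xv (lev u - 1) u' < \<infinity>" "lev u' \<le> lev u - 1"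
proof -
  have "1 \<le> lev u" using lev_pos assms by blast
  then have e: "Suc (lev u - 1) = lev u" by simp
  have "ereal (real_of_int (w (u, u'))) + Xv (lev u - 1) u' \<le> Xv (lev u) u"
    using Xv_max_ge[OF assms(2,3,4), of "lev u - 1"] e by simp
  then have "ereal (real_of_int (w (u, u'))) + Xv (lev u - 1) u' < \<infinity>" using conjunct2[OF lev[OF assms(1)]] by (rule le_less_trans)
  then show "Xv (lev u - 1) u' < \<infinity>" by (rule fin_of_sum)
  then show "lev u' \<le> lev u - 1" by (rule lev_le)
qed

lemma fin_mono: assumes "Xv j u < \<infinity>" "j \<le> k" shows "Xv k u < \<infinity>"
  using Xv_anti[OF assms(2), of u] assms(1) by (rule le_less_trans)

lemma closed_s1: assumes "Xv k u < \<infinity>" "u \<in> VMin" shows "Xv k (s1 k u) < \<infinity>"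
proof -
  have "ereal (real_of_int (w (u, s1 k u))) + Xv (jj k u - 1) (s1 k u) < \<infinity>"
    using s1[OF assms] jj(2)[of k u] assms(1) by simp
  then have "Xv (jj k u - 1) (s1 k u) < \<infinity>" by (rule fin_of_sum)
  moreover have "jj k u - 1 \<le> k" using jj(1)[of k u] by linarith
  ultimately show ?thesis by (rule fin_mono)
qed

lemma closed_s2: assumes "Xv k u < \<infinity>" "u \<in> VMin" shows "Xv k (s2 u) < \<infinity>"
proof -
  have "Xv (lev u - 1) (s2 u) < \<infinity>" using s2[OF assms] by blast
  moreover have "lev u - 1 \<le> k" using lev[OF assms(1)] by linarith
  ultimately show ?thesis by (rule fin_mono)
qed

lemma closed_max: assumes "Xv k u < \<infinity>" "u \<notin> T" "u \<notin> VMin" "u' \<in> succ u" shows "Xv k u' < \<infinity>"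
proof -
  have "Xv (lev u - 1) u' < \<infinity>" using max_succ_lev[OF assms] by blast
  moreover have "lev u - 1 \<le> k" using lev[OF assms(1)] by linarith
  ultimately show ?thesis by (rule fin_mono)
qed

lemma isint_fin: "isint x \<Longrightarrow> x < \<infinity> \<Longrightarrow> \<exists>z::int. x = ereal (real_of_int z)"
  by (auto simp: isint_def)

lemma SD:
  assumes u: "Xv k u < \<infinity>" "u \<notin> T" and u': "u' \<in> succ u" and which: "u \<notin> VMin \<or> u' = s1 k u"
    and a0: "0 \<le> a" and a1: "a * real (Suc k) \<le> 1"
  shows "real_of_int (w (u, u')) + phi k a u' \<le> phi k a u - a"
proof -
  define j where "j = jj k u"
  have j1: "1 \<le> j" using jj_pos u unfolding j_def by blast
  have jk: "j \<le> k" using jj(1) unfolding j_def by simp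
  have e: "Suc (j - 1) = j" using j1 by simp
  have H: "ereal (real_of_int (w (u, u'))) + Xv (j - 1) u' \<le> Xv k u"
  proof (cases "u \<in> VMin")
    case True
    then have "u' = s1 k u" using which by simp
    then show ?thesis using s1[OF u(1) True] jj(2)[of k u] unfolding j_def by simp
  next
    case False
    show ?thesis using Xv_max_ge[OF u(2) False u', of "j - 1"] jj(2)[of k u] e unfolding j_def by simp
  qed
  have u'fin: "Xv k u' < \<infinity>"
  proof (cases "u \<in> VMin")
    case True
    then have "u' = s1 k u" using which by simp
    then show ?thesis using closed_s1[OF u(1) True] by simp
  next
    case False then show ?thesis using closed_max[OF u False u'] by simp
  qed
  have "ereal (real_of_int (w (u, u'))) + Xv (j - 1) u' < \<infinity>" using H u(1) by (rule le_less_trans)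
  then have fin2: "Xv (j - 1) u' < \<infinity>" by (rule fin_of_sum)
  obtain p where p: "Xv k u' = ereal (real_of_int p)" using isint_fin[OF Xv_int u'fin] by blast
  obtain q where q: "Xv (j - 1) u' = ereal (real_of_int q)" using isint_fin[OF Xv_int fin2] by blast
  obtain r where r: "Xv k u = ereal (real_of_int r)" using isint_fin[OF Xv_int u(1)] by blast
  have wqr: "w (u, u') + q \<le> r" using H q r by simp
  have pq: "p \<le> q" using Xv_anti[of "j - 1" k u'] jk p q by simp
  have phiu: "phi k a u = real_of_int r + a * real j" using u(1) r by (simp add: phi_def j_def)
  have phiu': "phi k a u' = real_of_int p + a * real (jj k u')" using u'fin p by (simp add: phi_def)
  show ?thesis
  proof (cases "p = q")
    case True
    then have "Xv (j - 1) u' = Xv k u'" using p q by simp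
    then have "jj k u' \<le> j - 1" unfolding jj_def by (rule Least_le)
    then have "a * real (jj k u') \<le> a * (real j - 1)" using a0 j1 by (intro mult_left_mono) auto
    moreover have "a * (real j - 1) = a * real j - a" by (simp add: algebra_simps)
    moreover have "real_of_int p = real_of_int q" using True by simp
    moreover have "real_of_int (w (u, u')) + real_of_int q \<le> real_of_int r" using wqr by linarith
    ultimately show ?thesis using phiu phiu' by linarith
  next
    case False
    then have "p + 1 \<le> q" using pq by simp
    then have i1: "real_of_int (w (u, u')) + real_of_int p \<le> real_of_int r - 1" using wqr by linarith
    have "a * real (jj k u') \<le> a * real k" using a0 jj(1)[of k u'] by (intro mult_left_mono) auto
    moreover have "0 \<le> a * real j" using a0 by simp
    moreover have "a * real (Suc k) = a * real k + a" by (simp add: algebra_simps)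
    ultimately show ?thesis using phiu phiu' i1 a1 by linarith
  qed
qed


definition rho :: "nat \<Rightarrow> real \<Rightarrow> 'v \<Rightarrow> 'v pmf" where
  "rho k \<delta> u = (if Xv k u < \<infinity> \<and> u \<in> VMin then mix \<delta> (s1 k u) (s2 u) else return_pmf (dflt u))"

lemma rho_strat: "mless_strategy VMin E (rho k \<delta>)"
  unfolding mless_strategy_def
proof
  fix u assume u: "u \<in> VMin"
  show "set_pmf (rho k \<delta> u) \<subseteq> {u'. (u, u') \<in> E}"
  proof (cases "Xv k u < \<infinity>")
    case True
    have "set_pmf (rho k \<delta> u) \<subseteq> {s1 k u, s2 u}" using True u set_mix by (simp add: rho_def)
    also have "\<dots> \<subseteq> succ u" using s1[OF True u] s2[OF True u] by blast
    finally show ?thesis by (simp add: succ_def)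
  next
    case False
    then show ?thesis using dflt[OF disj(1)[OF u]] by (simp add: rho_def succ_def)
  qed
qed

lemma K_min: "Xv k u < \<infinity> \<Longrightarrow> u \<in> VMin \<Longrightarrow> mc_kernel VMin T (rho k \<delta>) \<tau> u = mix \<delta> (s1 k u) (s2 u)"
  using disj(1)[of u] by (simp add: mc_kernel_def rho_def)

lemma K_max: "u \<notin> T \<Longrightarrow> u \<notin> VMin \<Longrightarrow> mc_kernel VMin T (rho k \<delta>) \<tau> u = \<tau> u"
  by (simp add: mc_kernel_def)

lemma K_T: "u \<in> T \<Longrightarrow> mc_kernel VMin T \<rho> \<tau> u = return_pmf u"
  by (simp add: mc_kernel_def)

lemma tau_succ: "mless_strategy VMax E \<tau> \<Longrightarrow> u \<notin> T \<Longrightarrow> u \<notin> VMin \<Longrightarrow> set_pmf (\<tau> u) \<subseteq> succ u"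
  using part[of u] by (auto simp: mless_strategy_def succ_def)

lemma term_lem:
  assumes d0: "0 < \<delta>" and d1: "\<delta> \<le> 1" and \<tau>: "mless_strategy VMax E \<tau>"
  shows "Xv k u < \<infinity> \<Longrightarrow> lev u \<le> l \<Longrightarrow> pN (mc_kernel VMin T (rho k \<delta>) \<tau>) T (Suc l) u \<le> 1 - \<delta> ^ l"
proof (induction l arbitrary: u)
  case 0
  then have "Xv 0 u < \<infinity>" using lev[OF 0(1)] by simp
  then have "u \<in> T" by (cases "u \<in> T") auto
  then show ?case by (simp add: pN_Suc)
next
  case (Suc l)
  let ?K = "mc_kernel VMin T (rho k \<delta>) \<tau>"
  have pl: "\<delta> ^ Suc l \<le> \<delta> ^ l" using d0 d1 by (simp add: mult_left_le_one_le)
  have p1: "\<delta> ^ Suc l \<le> 1" by (rule power_le_one) (use d0 d1 in auto)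
  show ?case
  proof (cases "u \<in> T")
    case True then show ?thesis using p1 by (simp add: pN_Suc)
  next
    case nT: False
    have eq: "pN ?K T (Suc (Suc l)) u = (\<integral>u'. pN ?K T (Suc l) u' \<partial>measure_pmf (?K u))"
      using nT by (simp add: pN_Suc)
    show ?thesis
    proof (cases "u \<in> VMin")
      case True
      have "pN ?K T (Suc (Suc l)) u = (1 - \<delta>) * pN ?K T (Suc l) (s1 k u) + \<delta> * pN ?K T (Suc l) (s2 u)"
        unfolding eq K_min[OF Suc.prems(1) True] using d0 d1 by (intro int_mix) auto
      also have "\<dots> \<le> (1 - \<delta>) * 1 + \<delta> * (1 - \<delta> ^ l)"
      proof (intro add_mono mult_left_mono)
        show "pN ?K T (Suc l) (s1 k u) \<le> 1" by (rule pN_le1)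
        have "lev (s2 u) \<le> l" using s2_lev[OF Suc.prems(1) True] Suc.prems(2) by linarith
        then show "pN ?K T (Suc l) (s2 u) \<le> 1 - \<delta> ^ l"
          by (rule Suc.IH[OF closed_s2[OF Suc.prems(1) True]])
      qed (use d0 d1 in auto)
      also have "\<dots> = 1 - \<delta> ^ Suc l" by (simp add: algebra_simps)
      finally show ?thesis .
    next
      case False
      have "pN ?K T (Suc (Suc l)) u \<le> (\<integral>u'. 1 - \<delta> ^ l \<partial>measure_pmf (?K u))"
        unfolding eq
      proof (rule integral_mono_AE)
        show "AE u' in measure_pmf (?K u). pN ?K T (Suc l) u' \<le> 1 - \<delta> ^ l"
          unfolding AE_measure_pmf_iff
        proof
          fix u' assume "u' \<in> set_pmf (?K u)"
          then have u': "u' \<in> succ u" using tau_succ[OF \<tau> nT False] K_max[OF nT False] by auto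
          have "lev u' \<le> l" using max_succ_lev(2)[OF Suc.prems(1) nT False u'] Suc.prems(2) by linarith
          then show "pN ?K T (Suc l) u' \<le> 1 - \<delta> ^ l"
            by (rule Suc.IH[OF closed_max[OF Suc.prems(1) nT False u']])
        qed
      qed (auto simp: integrable_measure_pmf_finite)
      also have "\<dots> = 1 - \<delta> ^ l" by simp
      also have "\<dots> \<le> 1 - \<delta> ^ Suc l" using pl by simp
      finally show ?thesis .
    qed
  qed
qed

lemma U2_main:
  assumes fin: "Xv k v < \<infinity>" and e0: "0 < \<epsilon>"
  shows "Val_m_upper VMax VMin T E w v \<le> Xv k v + ereal \<epsilon>"
proof -
  define a where "a = min \<epsilon> 1 / real (Suc k)"
  define S where "S = (\<Sum>x\<in>UNIV. \<bar>real_of_int (w x)\<bar>) + 2 * (\<Sum>u\<in>UNIV. \<bar>phi k a u\<bar>)"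
  define \<delta> where "\<delta> = a / (S + a)"
  have a0: "0 < a" using e0 by (simp add: a_def)
  have a1: "a * real (Suc k) \<le> 1" by (simp add: a_def)
  have a2: "a * real k \<le> \<epsilon>"
  proof -
    have "a * real k \<le> a * real (Suc k)" using a0 by (intro mult_left_mono) auto
    also have "\<dots> = min \<epsilon> 1" by (simp add: a_def)
    finally show ?thesis by linarith
  qed
  have Bw: "\<bar>real_of_int (w x)\<bar> \<le> (\<Sum>x\<in>UNIV. \<bar>real_of_int (w x)\<bar>)" for x by (rule member_le_sum) auto
  have Bp: "\<bar>phi k a x\<bar> \<le> (\<Sum>u\<in>UNIV. \<bar>phi k a u\<bar>)" for x by (rule member_le_sum) auto
  have S0: "0 \<le> S" unfolding S_def by (intro add_nonneg_nonneg sum_nonneg mult_nonneg_nonneg) auto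
  have d0: "0 < \<delta>" using a0 S0 by (simp add: \<delta>_def)
  have d1: "\<delta> \<le> 1" using a0 S0 by (simp add: \<delta>_def)
  have dSa: "\<delta> * (S + a) = a" using a0 S0 by (simp add: \<delta>_def)
  let ?A = "{u. Xv k u < \<infinity>}"
  have "Val_m_upper VMax VMin T E w v \<le> Val_m_rho VMax VMin T E w (rho k \<delta>) v"
    unfolding Val_m_upper_def by (rule INF_lower) (simp add: rho_strat)
  also have "\<dots> \<le> ereal (phi k a v)"
    unfolding Val_m_rho_def
  proof (rule SUP_least)
    fix \<tau> assume "\<tau> \<in> {\<tau>. mless_strategy VMax E \<tau>}"
    then have \<tau>: "mless_strategy VMax E \<tau>" by simp
    let ?K = "mc_kernel VMin T (rho k \<delta>) \<tau>"
    show "exp_TP T w (mc_paths ?K v) \<le> ereal (phi k a v)"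
    proof (rule mc_upper[where A="?A" and m="Suc k" and q="1 - \<delta> ^ k"])
      fix u assume uA: "u \<in> ?A"
      then have uf: "Xv k u < \<infinity>" by simp
      show "set_pmf (?K u) \<subseteq> ?A"
      proof (cases "u \<in> T")
        case True then show ?thesis using uA by (simp add: K_T)
      next
        case nT: False
        show ?thesis
        proof (cases "u \<in> VMin")
          case True
          have "set_pmf (?K u) \<subseteq> {s1 k u, s2 u}" using K_min[OF uf True] set_mix by metis
          then show ?thesis using closed_s1[OF uf True] closed_s2[OF uf True] by blast
        next
          case False
          show ?thesis
          proof
            fix u' assume "u' \<in> set_pmf (?K u)"
            then have "u' \<in> succ u" using tau_succ[OF \<tau> nT False] K_max[OF nT False] by auto
            then show "u' \<in> ?A" using closed_max[OF uf nT False] by blast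
          qed
        qed
      qed
    next
      fix t assume "t \<in> T"
      then show "phi k a t = 0" by (simp add: phi_def Xv_T jj_T)
    next
      fix u assume uA: "u \<in> ?A" and nT: "u \<notin> T"
      then have uf: "Xv k u < \<infinity>" by simp
      show "(\<integral>u'. real_of_int (w (u, u')) + phi k a u' \<partial>measure_pmf (?K u)) \<le> phi k a u"
      proof (cases "u \<in> VMin")
        case True
        have "(\<integral>u'. real_of_int (w (u, u')) + phi k a u' \<partial>measure_pmf (?K u))
            = (1 - \<delta>) * (real_of_int (w (u, s1 k u)) + phi k a (s1 k u)) + \<delta> * (real_of_int (w (u, s2 u)) + phi k a (s2 u))"
          unfolding K_min[OF uf True] using d0 d1 by (intro int_mix) auto
        also have "\<dots> \<le> (1 - \<delta>) * (phi k a u - a) + \<delta> * (phi k a u + S)"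
        proof (rule add_mono; rule mult_left_mono)
          show "real_of_int (w (u, s1 k u)) + phi k a (s1 k u) \<le> phi k a u - a"
            using s1[OF uf True] a0 a1 by (intro SD[OF uf nT]) auto
          show "real_of_int (w (u, s2 u)) + phi k a (s2 u) \<le> phi k a u + S"
            using Bw[of "(u, s2 u)"] Bp[of "s2 u"] Bp[of u] unfolding S_def by linarith
        qed (use d0 d1 in auto)
        also have "\<dots> = phi k a u - a + \<delta> * (S + a)" by (simp add: algebra_simps)
        also have "\<dots> = phi k a u" using dSa by simp
        finally show ?thesis .
      next
        case False
        have "(\<integral>u'. real_of_int (w (u, u')) + phi k a u' \<partial>measure_pmf (?K u)) \<le> (\<integral>u'. phi k a u - a \<partial>measure_pmf (?K u))"
        proof (rule integral_mono_AE)
          show "AE u' in measure_pmf (?K u). real_of_int (w (u, u')) + phi k a u' \<le> phi k a u - a"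
            unfolding AE_measure_pmf_iff
          proof
            fix u' assume "u' \<in> set_pmf (?K u)"
            then have u': "u' \<in> succ u" using tau_succ[OF \<tau> nT False] K_max[OF nT False] by auto
            show "real_of_int (w (u, u')) + phi k a u' \<le> phi k a u - a"
              using False a0 a1 by (intro SD[OF uf nT u']) auto
          qed
        qed (auto simp: integrable_measure_pmf_finite)
        also have "\<dots> \<le> phi k a u" using a0 by simp
        finally show ?thesis .
      qed
    next
      fix u assume uA: "u \<in> ?A"
      then have uf: "Xv k u < \<infinity>" by simp
      have "pN ?K T (Suc k) u \<le> 1 - \<delta> ^ k"
        using lev[OF uf] by (intro term_lem[OF d0 d1 \<tau> uf]) auto
      then show "pN ?K T (Suc k) u \<le> 1 - \<delta> ^ k" .
    next
      show "1 - \<delta> ^ k < 1" using d0 by simp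
    next
      show "v \<in> ?A" using fin by simp
    qed
  qed
  also have "\<dots> \<le> Xv k v + ereal \<epsilon>"
  proof -
    obtain z where z: "Xv k v = ereal z" using fin Xv_not_MInf[of k v] by (cases "Xv k v") auto
    have "a * real (jj k v) \<le> a * real k" using a0 jj(1)[of k v] by (intro mult_left_mono) auto
    then have "phi k a v \<le> z + \<epsilon>" using fin z a2 by (simp add: phi_def)
    then show ?thesis using z by simp
  qed
  finally show ?thesis .
qed


lemma main: "Val_d VMax VMin T E w v = Val_m_upper VMax VMin T E w v"
proof -
  have d1: "Val_d VMax VMin T E w v \<le> Xinf v"
    unfolding Xinf_def by (rule INF_greatest) (rule upper_d)
  have d2: "Xinf v \<le> Val_d VMax VMin T E w v" by (rule lower_d)
  have m1: "Val_m_upper VMax VMin T E w v \<le> Xinf v"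
    unfolding Xinf_def
  proof (rule INF_greatest)
    fix k
    show "Val_m_upper VMax VMin T E w v \<le> Xv k v"
    proof (cases "Xv k v < \<infinity>")
      case True
      show ?thesis by (rule ereal_le_epsilon2) (rule U2_main[OF True])
    next
      case False then show ?thesis by (simp add: not_less top_unique)
    qed
  qed
  have m2: "Xinf v \<le> Val_m_upper VMax VMin T E w v"
    unfolding Val_m_upper_def by (rule INF_greatest) (rule lower_m, simp)
  show ?thesis using d1 d2 m1 m2 by simp
qed

end

theorem theorem6:
  fixes VMax VMin T :: "'v::finite set" and E :: "('v \<times> 'v) set" and w :: "'v \<times> 'v \<Rightarrow> int"
  assumes "spg VMax VMin T E"
  shows "\<forall>v. Val_d VMax VMin T E w v = Val_m_upper VMax VMin T E w v"
proof -
  interpret game VMax VMin T E w by unfold_locales (rule assms)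
  show ?thesis using main by blast
qed

end
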